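(* Let $\mathbb N^*$ be a nonempty subset of $\mathbb N$. Then for any given maps $\omega:\mathbb N^*\to\mathcal A$ and $\alpha:\mathbb N^*\to\mathcal A'$, there exist a family $\{S_n:n\in\mathbb N^*\}$ of pairwise disjoint countable subsets of $(-1,1)$ and a normally rising homeomorphism $f:J^2\to J^2$ such that, for every $n\in\mathbb N^*$, $S_n$ is dense in $J$, and $\omega_f(r,s)=\omega(n)$ and $\alpha_f(r,s)=\alpha(n)$ for every $(r,s)\in(-1,1)\times S_n$.
   Context: $J=[-1,1]$, and for $s\in J$, $J_s=J\times\{s\}$. $\mathcal A$ denotes the collection of all nonempty connected closed subsets of $J_1$, and $\mathcal A'$ the collection of all nonempty connected closed subsets of $J_{-1}$. Define $f_{01}:J\to J$ by $f_{01}(s)=(s+1)/2$ if $0\le s\le 1$, $f_{01}(s)=s+1/2$ if $-1/2\le s\le 0$, $f_{01}(s)=2s+1$ if $-1\le s\le -1/2$, and $f_{02}:J^2\to J^2$ by $f_{02}(r,s)=(r,f_{01}(s))$. A homeomorphism $f:J^2\to J^2$ is normally rising if $f|\partial J^2=f_{02}|\partial J^2$ (where $\partial J^2$ is the boundary of the square) and $f(J_s)=f_{02}(J_s)$ for every $s\in J$. For a homeomorphism $g$ and a point $x$, $\omega_g(x)$ is the $\omega$-limit set of $x$ (the set of limits of $g^{n_i}(x)$ over increasing sequences of positive integers $n_i$) and $\alpha_g(x)=\omega_{g^{-1}}(x)$ is the $\alpha$-limit set. *)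

theory Defs
  imports "HOL-Analysis.Analysis"
begin

definition JJ :: "real set" where "JJ = {-1..1}"

definition Jline :: "real \<Rightarrow> (real \<times> real) set" where
  "Jline s = JJ \<times> {s}"

definition sq :: "(real \<times> real) set" where "sq = JJ \<times> JJ"

definition calA :: "(real \<times> real) set set" where
  "calA = {C. C \<noteq> {} \<and> connected C \<and> closed C \<and> C \<subseteq> Jline 1}"

definition calA' :: "(real \<times> real) set set" where
  "calA' = {C. C \<noteq> {} \<and> connected C \<and> closed C \<and> C \<subseteq> Jline (-1)}"

definition f01 :: "real \<Rightarrow> real" where
  "f01 s = (if 0 \<le> s then (s + 1) / 2 else if -1/2 \<le> s then s + 1/2 else 2 * s + 1)"

definition f02 :: "real \<times> real \<Rightarrow> real \<times> real" where
  "f02 p = (fst p, f01 (snd p))"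

definition normally_rising :: "(real \<times> real \<Rightarrow> real \<times> real) \<Rightarrow> bool" where
  "normally_rising f \<longleftrightarrow>
     (\<exists>g. homeomorphism sq sq f g) \<and>
     (\<forall>p \<in> frontier sq. f p = f02 p) \<and>
     (\<forall>s \<in> JJ. f ` Jline s = f02 ` Jline s)"

definition omega_limit :: "('a \<Rightarrow> 'a) \<Rightarrow> 'a \<Rightarrow> 'a::topological_space set" where
  "omega_limit g x = {y. \<exists>n::nat \<Rightarrow> nat. strict_mono n \<and> (\<forall>i. 0 < n i) \<and>
                         ((\<lambda>i. (g ^^ n i) x) \<longlongrightarrow> y) sequentially}"

definition alpha_limit :: "(real \<times> real \<Rightarrow> real \<times> real) \<Rightarrow> real \<times> real \<Rightarrow> (real \<times> real) set" where
  "alpha_limit f x = omega_limit (inv_into sq f) x"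

end

theory Submission
  imports Defs
begin


lemma f01_min: "f01 s = min (2 * s + 1) (min (s+1/2) ((s+1)/2))"
  unfolding f01_def by auto

lemma cont_f01: "continuous_on S f01"
  unfolding f01_min[abs_def] by (intro continuous_intros) auto

definition f01i :: "real \<Rightarrow> real" where "f01i s = - f01 (- s)"

lemma f01i_f01[simp]: "f01i (f01 s) = s"
  unfolding f01i_def f01_def by (auto simp: field_simps)

lemma f01_f01i[simp]: "f01 (f01i s) = s"
  unfolding f01i_def f01_def by (auto simp: field_simps)

lemma f01_range: "s \<in> {-1<..<1} \<Longrightarrow> f01 s \<in> {-1<..<1}"
  unfolding f01_def by auto
lemma f01i_range: "s \<in> {-1<..<1} \<Longrightarrow> f01i s \<in> {-1<..<1}"
  unfolding f01i_def f01_def by auto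
lemma f01_pm1[simp]: "f01 1 = 1" "f01 (-1) = -1"
  unfolding f01_def by auto
lemma f01_JJ: "s \<in> JJ \<Longrightarrow> f01 s \<in> JJ"
  unfolding f01_def JJ_def by auto

definition AA :: "real \<Rightarrow> real \<Rightarrow> real" where
  "AA K r = K*(1+r) / (K*(1+r) + (1-r))"
definition BB :: "real \<Rightarrow> real \<Rightarrow> real" where
  "BB K r = (1+r) / (K*(1-r) + (1+r))"
definition Pf :: "real \<Rightarrow> real \<Rightarrow> real \<Rightarrow> real" where
  "Pf c K r = (1+c) * AA K r + (1-c) * BB K r - 1"

lemma denA: "(K::real) \<ge> 1 \<Longrightarrow> r \<in> {-1..1} \<Longrightarrow> K*(1+r) + (1-r) \<ge> 2"
  using mult_right_mono[of 1 K "1+r"] by auto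
lemma denB: "(K::real) \<ge> 1 \<Longrightarrow> r \<in> {-1..1} \<Longrightarrow> K*(1-r) + (1+r) \<ge> 2"
  using mult_right_mono[of 1 K "1-r"] by auto

lemma AA_range: assumes "K \<ge> 1" "r \<in> {-1..1}" shows "0 \<le> AA K r" "AA K r \<le> 1"
  using denA[OF assms] assms unfolding AA_def by (auto simp: divide_simps)
lemma BB_range: assumes "K \<ge> 1" "r \<in> {-1..1}" shows "0 \<le> BB K r" "BB K r \<le> 1"
  using denB[OF assms] assms mult_right_mono[of 1 K "1-r"] unfolding BB_def by (auto simp: divide_simps)

lemma AA_mono: assumes "K \<ge> 1" "r1 \<in> {-1..1}" "r2 \<in> {-1..1}" "r1 < r2"
  shows "AA K r1 < AA K r2"
proof -
  have d1: "K*(1+r1) + (1-r1) > 0" and d2: "K*(1+r2) + (1-r2) > 0"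
    using denA[of K r1] denA[of K r2] assms by auto
  have "K*(1+r1) * (K*(1+r2) + (1-r2)) < K*(1+r2) * (K*(1+r1) + (1-r1))"
    using assms by (auto simp: algebra_simps)
  then show ?thesis unfolding AA_def using d1 d2 by (simp add: divide_simps)
qed

lemma BB_mono: assumes "K \<ge> 1" "r1 \<in> {-1..1}" "r2 \<in> {-1..1}" "r1 < r2"
  shows "BB K r1 < BB K r2"
proof -
  have d1: "K*(1-r1) + (1+r1) > 0" and d2: "K*(1-r2) + (1+r2) > 0"
    using denB[of K r1] denB[of K r2] assms by auto
  have "(1+r1) * (K*(1-r2) + (1+r2)) < (1+r2) * (K*(1-r1) + (1+r1))"
    using assms by (auto simp: algebra_simps)
  then show ?thesis unfolding BB_def using d1 d2 by (simp add: divide_simps)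
qed

lemma Pf_mono: assumes "K \<ge> 1" "c \<in> {-1..1}" "r1 \<in> {-1..1}" "r2 \<in> {-1..1}" "r1 < r2"
  shows "Pf c K r1 < Pf c K r2"
proof -
  have a: "AA K r1 < AA K r2" and b: "BB K r1 < BB K r2" using AA_mono BB_mono assms by auto
  have c1: "0 \<le> 1 + c" "0 \<le> 1 - c" using assms by auto
  have "(1+c) * AA K r1 \<le> (1+c) * AA K r2" using a c1 by (intro mult_left_mono) auto
  moreover have "(1-c) * BB K r1 \<le> (1-c) * BB K r2" using b c1 by (intro mult_left_mono) auto
  moreover have "(1+c) * AA K r1 < (1+c) * AA K r2 \<or> (1-c) * BB K r1 < (1-c) * BB K r2"
    using a b assms by (cases "c = 1") auto
  ultimately show ?thesis unfolding Pf_def by linarith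
qed

lemma Pf_end[simp]: assumes "K \<ge> 1" shows "Pf c K 1 = 1" "Pf c K (-1) = -1"
  using assms unfolding Pf_def AA_def BB_def by auto

lemma Pf_range: assumes "K \<ge> 1" "c \<in> {-1..1}" "r \<in> {-1..1}" shows "Pf c K r \<in> {-1..1}"
proof -
  have "Pf c K (-1) \<le> Pf c K r" "Pf c K r \<le> Pf c K 1"
    using Pf_mono[OF assms(1,2), of "-1" r] Pf_mono[OF assms(1,2), of r 1] assms
    by (cases "r = -1"; cases "r = 1"; auto)+
  then show ?thesis using assms by auto
qed

lemma AA_diff: assumes "K \<ge> 1" "K' \<ge> 1" "r \<in> {-1..1}"
  shows "\<bar>AA K r - AA K' r\<bar> \<le> \<bar>K - K'\<bar> / K"
proof -
  define D where "D = K*(1+r) + (1-r)"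
  define D' where "D' = K'*(1+r) + (1-r)"
  have D: "D \<ge> 2" "D' \<ge> 2" using denA assms unfolding D_def D'_def by auto
  have eq: "AA K r - AA K' r = (1+r)*(1-r)*(K-K') / (D*D')"
    unfolding AA_def D_def[symmetric] D'_def[symmetric] using D
    by (simp add: field_simps) (simp add: D_def D'_def algebra_simps)
  have "K*(1+r)*(1-r) \<le> D * D'"
  proof -
    have "K*(1+r) \<le> D" "1 - r \<le> D'" using assms mult_right_mono[of 1 K' "1+r"] unfolding D_def D'_def by auto
    then show ?thesis using assms D by (intro mult_mono) auto
  qed
  then have "(1+r)*(1-r) / (D*D') \<le> 1 / K" using D assms by (simp add: divide_simps) (simp add: algebra_simps)
  then have "(1+r)*(1-r)*\<bar>K-K'\<bar> / (D*D') \<le> \<bar>K - K'\<bar> / K"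
    using mult_right_mono[of "(1+r)*(1-r) / (D*D')" "1/K" "\<bar>K-K'\<bar>"] by auto
  moreover have "\<bar>AA K r - AA K' r\<bar> = (1+r)*(1-r)*\<bar>K-K'\<bar> / (D*D')"
    unfolding eq using D assms by (simp add: abs_mult)
  ultimately show ?thesis by simp
qed

lemma BB_diff: assumes "K \<ge> 1" "K' \<ge> 1" "r \<in> {-1..1}"
  shows "\<bar>BB K r - BB K' r\<bar> \<le> \<bar>K - K'\<bar> / K"
proof -
  define D where "D = K*(1-r) + (1+r)"
  define D' where "D' = K'*(1-r) + (1+r)"
  have D: "D \<ge> 2" "D' \<ge> 2" using denB assms unfolding D_def D'_def by auto
  have eq: "BB K r - BB K' r = (1+r)*(1-r)*(K'-K) / (D*D')"
    unfolding BB_def D_def[symmetric] D'_def[symmetric] using D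
    by (simp add: field_simps) (simp add: D_def D'_def algebra_simps)
  have "K*(1-r)*(1+r) \<le> D * D'"
  proof -
    have "K*(1-r) \<le> D" "1 + r \<le> D'" using assms mult_right_mono[of 1 K' "1-r"] unfolding D_def D'_def by auto
    then show ?thesis using assms D by (intro mult_mono) auto
  qed
  then have "(1+r)*(1-r) / (D*D') \<le> 1 / K" using D assms by (simp add: divide_simps) (simp add: algebra_simps)
  then have "(1+r)*(1-r)*\<bar>K'-K\<bar> / (D*D') \<le> \<bar>K - K'\<bar> / K"
    using mult_right_mono[of "(1+r)*(1-r) / (D*D')" "1/K" "\<bar>K'-K\<bar>"] by (auto simp: abs_minus_commute)
  moreover have "\<bar>BB K r - BB K' r\<bar> = (1+r)*(1-r)*\<bar>K'-K\<bar> / (D*D')"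
    unfolding eq using D assms by (simp add: abs_mult)
  ultimately show ?thesis by simp
qed

lemma Pf_diff: assumes "K \<ge> 1" "K' \<ge> 1" "r \<in> {-1..1}" "c \<in> {-1..1}" "c' \<in> {-1..1}"
  shows "\<bar>Pf c K r - Pf c' K' r\<bar> \<le> \<bar>c - c'\<bar> + 2 * \<bar>K - K'\<bar> / K"
proof -
  have eq: "Pf c K r - Pf c' K' r = (c - c') * (AA K r - BB K r) + (1+c') * (AA K r - AA K' r)
      + (1-c') * (BB K r - BB K' r)"
    unfolding Pf_def by (simp add: algebra_simps)
  have "\<bar>(c - c') * (AA K r - BB K r)\<bar> \<le> \<bar>c - c'\<bar>"
    using AA_range[OF assms(1,3)] BB_range[OF assms(1,3)]
    by (auto simp: abs_mult intro!: mult_left_le)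
  moreover have "\<bar>(1+c') * (AA K r - AA K' r)\<bar> \<le> (1+c') * (\<bar>K - K'\<bar> / K)"
  proof -
    have "(1+c') * \<bar>AA K r - AA K' r\<bar> \<le> (1+c') * (\<bar>K - K'\<bar> / K)"
      using AA_diff[OF assms(1-3)] assms(5) by (intro mult_left_mono) auto
    then show ?thesis using assms(5) by (simp add: abs_mult)
  qed
  moreover have "\<bar>(1-c') * (BB K r - BB K' r)\<bar> \<le> (1-c') * (\<bar>K - K'\<bar> / K)"
  proof -
    have "(1-c') * \<bar>BB K r - BB K' r\<bar> \<le> (1-c') * (\<bar>K - K'\<bar> / K)"
      using BB_diff[OF assms(1-3)] assms(5) by (intro mult_left_mono) auto
    then show ?thesis using assms(5) by (simp add: abs_mult)
  qed
  ultimately have "\<bar>Pf c K r - Pf c' K' r\<bar> \<le> \<bar>c - c'\<bar> + (1+c') * (\<bar>K - K'\<bar> / K) + (1-c') * (\<bar>K - K'\<bar> / K)"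
    unfolding eq by linarith
  also have "\<dots> = \<bar>c - c'\<bar> + 2 * \<bar>K - K'\<bar> / K"
    using assms(1) by (simp add: field_simps)
  finally show ?thesis .
qed

lemma Pf_squeeze: assumes "K \<ge> 1" "r \<in> {-1<..<1}" "c \<in> {-1..1}"
  shows "\<bar>Pf c K r - c\<bar> \<le> 2 * ((1-r)/(1+r) + (1+r)/(1-r)) / K"
proof -
  have r: "1 + r > 0" "1 - r > 0" using assms by auto
  define D where "D = K*(1+r) + (1-r)"
  define E where "E = K*(1-r) + (1+r)"
  have D: "D \<ge> K*(1+r)" "E \<ge> K*(1-r)" using r unfolding D_def E_def by auto
  have KD: "K*(1+r) > 0" "K*(1-r) > 0" using r assms by auto
  have eq: "Pf c K r - c = (1+c) * (-(1-r)/D) + (1-c) * ((1+r)/E)"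
    unfolding Pf_def AA_def BB_def D_def[symmetric] E_def[symmetric] using D KD
    by (simp add: field_simps) (simp add: D_def algebra_simps)
  have a: "(1-r)/D \<le> (1-r)/(K*(1+r))" using D KD r by (intro divide_left_mono) auto
  have b: "(1+r)/E \<le> (1+r)/(K*(1-r))" using D KD r by (intro divide_left_mono) auto
  have a0: "0 \<le> (1-r)/D" "0 \<le> (1+r)/E" using D KD r by auto
  have p1: "0 \<le> (1+c) * ((1-r)/D)" "0 \<le> (1-c) * ((1+r)/E)" using assms a0 by (intro mult_nonneg_nonneg; simp)+
  have eq2: "Pf c K r - c = - ((1+c) * ((1-r)/D)) + (1-c) * ((1+r)/E)" unfolding eq by (simp add: algebra_simps minus_divide_left)
  have "\<bar>Pf c K r - c\<bar> \<le> (1+c) * ((1-r)/D) + (1-c) * ((1+r)/E)"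
    unfolding eq2 using p1 by (simp only: abs_le_iff) linarith
  also have "\<dots> \<le> 2 * ((1-r)/(K*(1+r))) + 2 * ((1+r)/(K*(1-r)))"
    using a b a0 assms by (intro add_mono mult_mono) auto
  also have "\<dots> = 2 * ((1-r)/(1+r) + (1+r)/(1-r)) / K"
  proof -
    have nz: "1 + r \<noteq> 0" "1 - r \<noteq> 0" "K \<noteq> 0" using r assms by auto
    have e1: "(1-r)/(K*(1+r)) = ((1-r)/(1+r))/K" "(1+r)/(K*(1-r)) = ((1+r)/(1-r))/K"
      by (simp_all add: mult.commute)
    show ?thesis unfolding e1 by (simp add: add_divide_distrib)
  qed
  finally show ?thesis .
qed



definition tau :: "real \<Rightarrow> real" where
  "tau s = max 0 (- log 2 (1-s)) + max 0 (- log 2 (1+s) - 1)"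
definition th :: "real \<Rightarrow> real" where "th s = sqrt (tau s)"
definition Kf :: "real \<Rightarrow> real" where "Kf s = 1 + tau s"

lemma tau_nonneg: "tau s \<ge> 0" unfolding tau_def by auto
lemma th_nonneg: "th s \<ge> 0" unfolding th_def using tau_nonneg by auto
lemma Kf_ge1: "Kf s \<ge> 1" unfolding Kf_def using tau_nonneg by auto

lemma cont_tau: "continuous_on {-1<..<1} tau"
  unfolding tau_def by (intro continuous_intros) auto
lemma cont_th: "continuous_on {-1<..<1} th"
  unfolding th_def by (intro continuous_intros cont_tau)
lemma cont_Kf: "continuous_on {-1<..<1} Kf"
  unfolding Kf_def by (intro continuous_intros cont_tau)

lemma tau_top: assumes "0 \<le> s" "s < 1" shows "tau s = - log 2 (1-s)"
proof -
  have "log 2 (1-s) \<le> 0" using assms by (subst log_le_zero_cancel_iff) auto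
  moreover have "log 2 (1+s) \<ge> 0" using assms by (subst zero_le_log_cancel_iff) auto
  ultimately show ?thesis unfolding tau_def by auto
qed

lemma tau_bot: assumes "-1 < s" "s \<le> 0" shows "tau s = max 0 (- log 2 (1+s) - 1)"
proof -
  have "log 2 (1-s) \<ge> 0" using assms by (subst zero_le_log_cancel_iff) auto
  then show ?thesis unfolding tau_def by auto
qed

lemma log2_half: "x > 0 \<Longrightarrow> log 2 (x/2) = log 2 x - 1"
  by (simp add: log_divide)
lemma log2_double: "x > 0 \<Longrightarrow> log 2 (2*x) = log 2 x + 1"
  by (simp add: log_mult)

lemma tau_f01_top: assumes "0 \<le> s" "s < 1" shows "tau (f01 s) = tau s + 1"
proof -
  have f: "f01 s = (s+1)/2" "0 \<le> (s+1)/2" "(s+1)/2 < 1" using assms unfolding f01_def by auto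
  have e: "1 - (s+1)/2 = (1-s)/2" by (simp add: field_simps)
  show ?thesis unfolding f(1) tau_top[OF f(2,3)] tau_top[OF assms] e using assms
    by (simp add: log2_half)
qed

lemma tau_f01_bot: assumes "-1 < s" "s < - 1/2" shows "tau (f01 s) = max 0 (tau s - 1)"
proof -
  have f: "f01 s = 2 * s + 1" "-1 < 2 * s + 1" "2 * s + 1 \<le> 0" using assms unfolding f01_def by auto
  have e: "1 + (2 * s + 1) = 2*(1+s)" by (simp add: field_simps)
  have l: "log 2 (1+s) \<le> -1"
  proof -
    have "log 2 (1+s) \<le> log 2 (1/2)" using assms by (subst log_le_cancel_iff) auto
    then show ?thesis by (simp add: log_divide)
  qed
  have ts: "tau s = - log 2 (1+s) - 1" using tau_bot[of s] assms l by auto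
  have "tau (f01 s) = max 0 (- log 2 (1 + (2 * s + 1)) - 1)" using tau_bot[OF f(2,3)] f(1) by simp
  also have "log 2 (1 + (2 * s + 1)) = log 2 (1+s) + 1" unfolding e by (rule log2_double) (use assms in simp)
  finally show ?thesis unfolding ts by simp
qed

lemma tau_f01_diff: assumes "s \<in> {-1<..<1}" "0 \<le> s \<or> s < -1/2"
  shows "\<bar>tau (f01 s) - tau s\<bar> \<le> 1"
  using assms tau_f01_top[of s] tau_f01_bot[of s] tau_nonneg[of s] by auto

lemma sqrt_diff_bound: assumes "a > 0" "b \<ge> 0" "\<bar>a - b\<bar> \<le> 1"
  shows "\<bar>sqrt a - sqrt b\<bar> \<le> 1 / sqrt a"
proof -
  have e: "(sqrt a - sqrt b) * (sqrt a + sqrt b) = a - b"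
    using assms by (simp add: algebra_simps)
  have "\<bar>sqrt a - sqrt b\<bar> * (sqrt a + sqrt b) = \<bar>a - b\<bar>"
    unfolding e[symmetric] abs_mult using assms by simp
  moreover have "sqrt a + sqrt b \<ge> sqrt a" "sqrt a > 0" using assms by auto
  ultimately have "\<bar>sqrt a - sqrt b\<bar> * sqrt a \<le> 1"
    using assms(3) by (smt (verit, best) abs_ge_zero mult_left_mono)
  then show ?thesis using \<open>sqrt a > 0\<close> by (simp add: divide_simps)
qed

lemma cont_frac_comp:
  fixes H :: "real \<Rightarrow> real"
  assumes H: "continuous_on {0..1} H" and H01: "H 0 = H 1"
  shows "continuous_on UNIV (\<lambda>x. H (frac x))"
proof -
  have "isCont (\<lambda>x. H (frac x)) x" for x
  proof -
    define n where "n = real_of_int \<lfloor>x\<rfloor>"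
    have nx: "n \<le> x" "x < n + 1" unfolding n_def by linarith+
    have nint: "n \<in> \<int>" unfolding n_def by simp
    have eq: "H (frac y) = (if y \<le> n then H (y - (n-1)) else H (y - n))" if y: "y \<in> {n-1..n+1}" for y
    proof -
      consider "y < n" | "y = n" | "n < y" "y < n+1" | "y = n+1" using y by force
      then show ?thesis
      proof cases
        case 1
        have "frac y = y - (n-1)" unfolding frac_unique_iff using 1 y nint by auto
        then show ?thesis using 1 by auto
      next
        case 2
        have "frac y = 0" unfolding frac_unique_iff using 2 nint by auto
        then have "H (frac y) = H 1" by (simp only: H01)
        moreover have "y - (n-1) = 1" "y \<le> n" using 2 by auto
        ultimately show ?thesis by simp
      next
        case 3
        have "frac y = y - n" unfolding frac_unique_iff using 3 nint by auto
        then show ?thesis using 3 by auto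
      next
        case 4
        have "frac y = 0" unfolding frac_unique_iff using 4 nint by auto
        then have "H (frac y) = H 1" by (simp only: H01)
        moreover have "y - n = 1" "\<not> y \<le> n" using 4 by auto
        ultimately show ?thesis by simp
      qed
    qed
    have c1: "continuous_on {y \<in> {n-1..n+1}. y \<le> n} (\<lambda>y. H (y - (n-1)))"
      by (rule continuous_on_compose2[OF H]) (auto intro!: continuous_intros)
    have c2: "continuous_on {y \<in> {n-1..n+1}. n \<le> y} (\<lambda>y. H (y - n))"
      by (rule continuous_on_compose2[OF H]) (auto intro!: continuous_intros)
    have "continuous_on {n-1..n+1} (\<lambda>y. if y \<le> n then H (y - (n-1)) else H (y - n))"
      by (rule continuous_on_cases_le[OF c1 c2]) (auto intro!: continuous_intros simp: H01)
    then have "continuous_on {n-1..n+1} (\<lambda>y. H (frac y))"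
      by (rule continuous_on_eq) (auto simp: eq)
    moreover have "x \<in> interior {n-1..n+1}" using nx by auto
    ultimately show ?thesis by (rule continuous_on_interior)
  qed
  then show ?thesis by (simp add: continuous_at_imp_continuous_on)
qed

definition tent :: "real \<Rightarrow> real" where "tent x = 1 - \<bar>2*x - 1\<bar>"
definition Dt :: "nat \<Rightarrow> real \<Rightarrow> real" where "Dt m v = (if m = 0 then 0 else (tent ^^ m) v)"

lemma tent_range: "x \<in> {0..1} \<Longrightarrow> tent x \<in> {0..1}" unfolding tent_def by auto
lemma tentp_range: "x \<in> {0..1} \<Longrightarrow> (tent ^^ m) x \<in> {0..1}"
proof (induction m)
  case (Suc m) then show ?case using tent_range[OF Suc.IH[OF Suc.prems]] by simp
qed simp
lemma Dt_range: "x \<in> {0..1} \<Longrightarrow> Dt m x \<in> {0..1}"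
  unfolding Dt_def using tentp_range by auto
lemma tentp_0[simp]: "(tent ^^ m) 0 = 0"
  by (induction m) (auto simp: tent_def)
lemma Dt_0[simp]: "Dt m 0 = 0" unfolding Dt_def by auto
lemma Dt_1[simp]: "Dt m 1 = 0"
proof (cases m)
  case (Suc k)
  have "tent 1 = 0" unfolding tent_def by simp
  then show ?thesis unfolding Dt_def Suc funpow_Suc_right by simp
qed (simp add: Dt_def)
lemma cont_tentp: "continuous_on UNIV (tent ^^ m)"
proof (induction m)
  case (Suc m)
  have "continuous_on UNIV tent" unfolding tent_def[abs_def] by (intro continuous_intros)
  then show ?case unfolding funpow.simps(2) using Suc by (intro continuous_on_compose) (auto intro: continuous_on_subset)
qed simp
lemma cont_Dt: "continuous_on S (Dt m)"
  unfolding Dt_def[abs_def] using cont_tentp[of m] continuous_on_subset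
  by (cases "m = 0") auto

definition vt :: "real \<Rightarrow> real" where "vt s = 2 - 2 powr (1 - frac (- log 2 (1 - s)))"
definition vb :: "real \<Rightarrow> real" where "vb s = 2 powr (frac (log 2 (1 + s))) - 1"
definition dd :: "nat \<Rightarrow> real \<Rightarrow> real" where
  "dd m s = (if s \<le> 0 then Dt m (vb s) else Dt m (vt s))"

lemma vt_range: "vt s \<in> {0..1}"
proof -
  have f: "0 \<le> frac x" "frac x < 1" for x :: real by (auto simp: frac_lt_1)
  have "2 powr (1 - frac (- log 2 (1 - s))) \<le> 2 powr 1"
    using f by (intro powr_mono) auto
  moreover have "2 powr 0 \<le> 2 powr (1 - frac (- log 2 (1 - s)))"
    using f[of "- log 2 (1 - s)"] by (intro powr_mono) auto
  ultimately show ?thesis unfolding vt_def by auto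
qed
lemma vb_range: "vb s \<in> {0..1}"
proof -
  have f: "0 \<le> frac x" "frac x < 1" for x :: real by (auto simp: frac_lt_1)
  have "2 powr (frac (log 2 (1 + s))) \<le> 2 powr 1"
    using f[of "log 2 (1 + s)"] by (intro powr_mono) auto
  moreover have "2 powr 0 \<le> 2 powr (frac (log 2 (1 + s)))"
    using f by (intro powr_mono) auto
  ultimately show ?thesis unfolding vb_def by auto
qed
lemma dd_range: "dd m s \<in> {0..1}"
  unfolding dd_def using Dt_range vt_range vb_range by auto
lemma dd_zero[simp]: "dd m 0 = 0"
  unfolding dd_def vb_def by simp

lemma cont_dd: "continuous_on {-1<..<1} (dd m)"
proof -
  have Gb: "continuous_on UNIV (\<lambda>x. Dt m (2 powr (frac x) - 1))"
    by (rule cont_frac_comp[where H = "\<lambda>p. Dt m (2 powr p - 1)"])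
       (auto intro!: continuous_on_compose2[OF cont_Dt[of UNIV]] continuous_intros)
  have Gt: "continuous_on UNIV (\<lambda>x. Dt m (2 - 2 powr (1 - frac x)))"
    by (rule cont_frac_comp[where H = "\<lambda>p. Dt m (2 - 2 powr (1 - p))"])
       (auto intro!: continuous_on_compose2[OF cont_Dt[of UNIV]] continuous_intros)
  have c1: "continuous_on {x \<in> {-1<..<1}. x \<le> 0} (\<lambda>s. Dt m (vb s))"
    unfolding vb_def
    by (rule continuous_on_compose2[OF Gb, where f = "\<lambda>s. log 2 (1 + s)"]) (auto intro!: continuous_intros)
  have c2: "continuous_on {x \<in> {-1<..<1}. 0 \<le> x} (\<lambda>s. Dt m (vt s))"
    unfolding vt_def
    by (rule continuous_on_compose2[OF Gt, where f = "\<lambda>s. - log 2 (1 - s)"]) (auto intro!: continuous_intros)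
  show ?thesis unfolding dd_def[abs_def]
    by (rule continuous_on_cases_le[OF c1 c2]) (auto intro!: continuous_intros simp: vb_def vt_def)
qed

definition ramp :: "nat \<Rightarrow> real \<Rightarrow> real" where "ramp m t = max 0 (min 1 (t - real m))"

lemma ramp_range: "ramp m t \<in> {0..1}" unfolding ramp_def by auto
lemma cont_ramp: "continuous_on S (ramp m)" unfolding ramp_def[abs_def] by (intro continuous_intros)

fun Fr :: "(nat \<Rightarrow> real \<Rightarrow> real) \<Rightarrow> nat \<Rightarrow> real \<Rightarrow> real" where
  "Fr B 0 s = 0"
| "Fr B (Suc m) s = (1 - ramp m (th s) * dd (Suc m) s) * Fr B m s
      + ramp m (th s) * dd (Suc m) s * B (Suc m) (th s)"

lemma convex_bound:
  fixes t x y z :: real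
  assumes "0 \<le> t" "t \<le> 1" "x \<le> z" "y \<le> z"
  shows "(1 - t) * x + t * y \<le> z"
proof -
  have "(1 - t) * x \<le> (1 - t) * z" using assms by (intro mult_left_mono) auto
  moreover have "t * y \<le> t * z" using assms by (intro mult_left_mono) auto
  ultimately show ?thesis by (simp add: algebra_simps)
qed

lemma Fr_range:
  assumes B: "\<And>j t. B j t \<in> {-1..1}"
  shows "Fr B m s \<in> {-1..1}"
proof (induction m)
  case (Suc m)
  define t where "t = ramp m (th s) * dd (Suc m) s"
  have t: "0 \<le> t" "t \<le> 1" unfolding t_def using ramp_range[of m "th s"] dd_range[of "Suc m" s]
    by (auto intro: mult_le_one)
  have "(1 - t) * Fr B m s + t * B (Suc m) (th s) \<le> 1"
    using Suc B[of "Suc m" "th s"] t by (intro convex_bound) auto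
  moreover have "(1 - t) * (- Fr B m s) + t * (- B (Suc m) (th s)) \<le> 1"
    using Suc B[of "Suc m" "th s"] t by (intro convex_bound) auto
  ultimately show ?case unfolding Fr.simps t_def[symmetric]
    by (auto simp: algebra_simps)
qed simp

lemma Fr_zero[simp]: "Fr B m 0 = 0"
  by (induction m) auto

lemma Fr_cont:
  assumes "\<And>j. continuous_on UNIV (B j)"
  shows "continuous_on {-1<..<1} (Fr B m)"
proof (induction m)
  case 0 then show ?case by simp
next
  case (Suc m)
  have "continuous_on {-1<..<1} (\<lambda>s. B (Suc m) (th s))"
    by (rule continuous_on_compose2[OF assms cont_th]) auto
  then show ?case unfolding Fr.simps
    by (intro continuous_intros Suc continuous_on_compose2[OF cont_ramp cont_th] cont_dd) auto
qed

lemma Fr_stable: "real m \<ge> th s \<Longrightarrow> Fr B (m + i) s = Fr B m s"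
proof (induction i)
  case (Suc i)
  have "ramp (m + i) (th s) = 0" unfolding ramp_def using Suc.prems by auto
  then show ?case using Suc by simp
qed simp

lemma Fr_stable2: assumes "real m \<ge> th s" "real m' \<ge> th s" shows "Fr B m s = Fr B m' s"
proof (cases "m \<le> m'")
  case True
  then show ?thesis using Fr_stable[OF assms(1), of B "m' - m"] by simp
next
  case False
  then show ?thesis using Fr_stable[OF assms(2), of B "m - m'"] by simp
qed

lemma Fr_level:
  assumes "j \<ge> 1" "dd j s = 1" "\<And>m. m > j \<Longrightarrow> dd m s = 0" "th s \<ge> real j" "M \<ge> j"
  shows "Fr B M s = B j (th s)"
  using assms(5)
proof (induction M)
  case 0 then show ?case using assms by simp
next
  case (Suc M)
  show ?case
  proof (cases "Suc M = j")
    case True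
    have "ramp M (th s) = 1" unfolding ramp_def using assms True by auto
    moreover have "dd (Suc M) s = 1" using True assms(2) by simp
    ultimately have "Fr B (Suc M) s = B (Suc M) (th s)" by simp
    then show ?thesis using True by simp
  next
    case False
    then have "dd (Suc M) s = 0" "M \<ge> j" using Suc.prems assms(3) by auto
    then show ?thesis using Suc.IH by simp
  qed
qed

lemma ramp_sum: "(\<Sum>m<M. ramp m t) = max 0 (min t (real M))"
  by (induction M) (auto simp: ramp_def max_def min_def)

lemma ramp_mono: "t \<le> t' \<Longrightarrow> ramp m t \<le> ramp m t'" unfolding ramp_def by auto

lemma ramp_sum_diff_le: assumes "t \<le> t'"
  shows "(\<Sum>m<M. \<bar>ramp m t - ramp m t'\<bar>) \<le> t' - t"
proof -
  have "(\<Sum>m<M. \<bar>ramp m t - ramp m t'\<bar>) = (\<Sum>m<M. ramp m t' - ramp m t)"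
  proof (intro sum.cong refl)
    fix m
    have "ramp m t \<le> ramp m t'" by (rule ramp_mono[OF assms])
    then show "\<bar>ramp m t - ramp m t'\<bar> = ramp m t' - ramp m t" by simp
  qed
  also have "\<dots> = max 0 (min t' (real M)) - max 0 (min t (real M))"
    by (simp add: sum_subtractf ramp_sum)
  also have "\<dots> \<le> t' - t" using assms by (auto simp: max_def min_def)
  finally show ?thesis .
qed

lemma ramp_sum_diff: "(\<Sum>m<M. \<bar>ramp m t - ramp m t'\<bar>) \<le> \<bar>t - t'\<bar>"
proof (cases "t \<le> t'")
  case True then show ?thesis using ramp_sum_diff_le[OF True, of M] by auto
next
  case False
  then have "(\<Sum>m<M. \<bar>ramp m t' - ramp m t\<bar>) \<le> t - t'" using ramp_sum_diff_le[of t' t M] by auto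
  then show ?thesis by (simp add: abs_minus_commute)
qed

lemma Fr_lip:
  assumes B: "\<And>j t. B j t \<in> {-1..1}" and L: "\<And>j t t'. \<bar>B j t - B j t'\<bar> \<le> 4 * \<bar>t - t'\<bar>"
    and d: "\<And>m. dd m s = dd m s'"
  shows "\<bar>Fr B M s - Fr B M s'\<bar> \<le> 4 * \<bar>th s - th s'\<bar> + 2 * (\<Sum>m<M. \<bar>ramp m (th s) - ramp m (th s')\<bar>)"
proof (induction M)
  case 0 then show ?case by simp
next
  case (Suc M)
  define e where "e = ramp M (th s)"
  define e' where "e' = ramp M (th s')"
  define dm where "dm = dd (Suc M) s"
  define F where "F = Fr B M s"
  define G where "G = Fr B M s'"
  define b where "b = B (Suc M) (th s)"
  define b' where "b' = B (Suc M) (th s')"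
  define Z where "Z = 4 * \<bar>th s - th s'\<bar> + 2 * (\<Sum>m<M. \<bar>ramp m (th s) - ramp m (th s')\<bar>)"
  have eq: "Fr B (Suc M) s - Fr B (Suc M) s' =
      (1 - e*dm) * (F - G) + (e*dm) * (b - b') + (e' - e) * dm * (G - b')"
    unfolding Fr.simps e_def e'_def dm_def F_def G_def b_def b'_def d[of "Suc M"]
    by (simp add: algebra_simps)
  have t: "0 \<le> e*dm" "e*dm \<le> 1" unfolding e_def dm_def using ramp_range[of M "th s"] dd_range[of "Suc M" s]
    by (auto intro: mult_le_one)
  have FG: "\<bar>F - G\<bar> \<le> Z" using Suc unfolding F_def G_def Z_def .
  have "0 \<le> (\<Sum>m<M. \<bar>ramp m (th s) - ramp m (th s')\<bar>)" by (intro sum_nonneg) auto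
  then have bb: "\<bar>b - b'\<bar> \<le> Z" unfolding b_def b'_def Z_def using L[of "Suc M" "th s" "th s'"]
    by linarith
  have a1: "\<bar>(1 - e*dm) * (F - G) + (e*dm) * (b - b')\<bar> \<le> Z"
  proof -
    have "\<bar>(1 - e*dm) * (F - G) + (e*dm) * (b - b')\<bar> \<le> \<bar>(1 - e*dm) * (F - G)\<bar> + \<bar>(e*dm) * (b - b')\<bar>"
      by (rule abs_triangle_ineq)
    also have "\<dots> = (1 - e*dm) * \<bar>F - G\<bar> + (e*dm) * \<bar>b - b'\<bar>"
      unfolding abs_mult[of "1 - e*dm"] abs_mult[of "e*dm"] using t by simp
    also have "\<dots> \<le> Z" using t FG bb by (intro convex_bound) auto
    finally show ?thesis .
  qed
  have a2: "\<bar>(e' - e) * dm * (G - b')\<bar> \<le> 2 * \<bar>e - e'\<bar>"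
  proof -
    have "\<bar>G - b'\<bar> \<le> 2" using Fr_range[of B M s', OF B] B[of "Suc M" "th s'"] unfolding G_def b'_def by auto
    moreover have "\<bar>dm\<bar> \<le> 1" using dd_range[of "Suc M" s] unfolding dm_def by auto
    ultimately have "\<bar>dm\<bar> * \<bar>G - b'\<bar> \<le> 1 * 2" by (intro mult_mono) auto
    then have "\<bar>e' - e\<bar> * (\<bar>dm\<bar> * \<bar>G - b'\<bar>) \<le> \<bar>e' - e\<bar> * 2" by (intro mult_left_mono) auto
    moreover have "\<bar>(e' - e) * dm * (G - b')\<bar> = \<bar>e' - e\<bar> * (\<bar>dm\<bar> * \<bar>G - b'\<bar>)"
      by (simp add: abs_mult)
    ultimately show ?thesis by (simp add: abs_minus_commute)
  qed
  have "\<bar>Fr B (Suc M) s - Fr B (Suc M) s'\<bar> \<le> Z + 2 * \<bar>e - e'\<bar>"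
    unfolding eq using a1 a2 by linarith
  then show ?case unfolding Z_def e_def e'_def by (simp add: algebra_simps)
qed

definition gam :: "(nat \<Rightarrow> real \<Rightarrow> real) \<Rightarrow> (nat \<Rightarrow> real \<Rightarrow> real) \<Rightarrow> real \<Rightarrow> real" where
  "gam BW BA s = (if s \<le> 0 then Fr BA (nat \<lceil>th s\<rceil>) s else Fr BW (nat \<lceil>th s\<rceil>) s)"

lemma gam_eq: assumes "real M \<ge> th s"
  shows "gam BW BA s = (if s \<le> 0 then Fr BA M s else Fr BW M s)"
proof -
  have "real (nat \<lceil>th s\<rceil>) \<ge> th s" using th_nonneg[of s] by linarith
  then show ?thesis unfolding gam_def using Fr_stable2[OF assms] by auto
qed

lemma gam_range: assumes "\<And>j t. BW j t \<in> {-1..1}" "\<And>j t. BA j t \<in> {-1..1}"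
  shows "gam BW BA s \<in> {-1..1}"
  unfolding gam_def using Fr_range[OF assms(1)] Fr_range[OF assms(2)] by auto

lemma gam_cont:
  assumes "\<And>j. continuous_on UNIV (BW j)" "\<And>j. continuous_on UNIV (BA j)"
  shows "continuous_on {-1<..<1} (gam BW BA)"
proof -
  define A where "A M = {-1<..<1} \<inter> th -` {..<real M}" for M :: nat
  have U: "(\<Union>M\<in>UNIV. A M) = {-1<..<1}"
  proof (auto simp: A_def)
    fix x :: real
    show "\<exists>M. th x < real M" using reals_Archimedean2 by blast
  qed
  have "continuous_on (\<Union>M\<in>UNIV. A M) (gam BW BA)"
  proof (rule continuous_on_open_UN)
    fix M
    show "open (A M)" unfolding A_def by (rule continuous_open_preimage[OF cont_th]) auto
    have c: "continuous_on {-1<..<1} (\<lambda>s. if s \<le> 0 then Fr BA M s else Fr BW M s)"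
      by (rule continuous_on_cases_le) (auto intro: continuous_on_subset[OF Fr_cont[OF assms(2)]]
           continuous_on_subset[OF Fr_cont[OF assms(1)]] continuous_intros)
    have "continuous_on (A M) (\<lambda>s. if s \<le> 0 then Fr BA M s else Fr BW M s)"
      by (rule continuous_on_subset[OF c]) (auto simp: A_def)
    then show "continuous_on (A M) (gam BW BA)"
      by (rule continuous_on_eq) (auto simp: A_def gam_eq[OF less_imp_le])
  qed
  then show ?thesis unfolding U .
qed



lemma dd_f01_top: assumes "0 < s" "s < 1" shows "dd m (f01 s) = dd m s"
proof -
  have f: "f01 s = (s+1)/2" using assms unfolding f01_def by auto
  have e: "1 - (s+1)/2 = (1-s)/2" by (simp add: field_simps)
  have "- log 2 (1 - f01 s) = - log 2 (1-s) + 1" unfolding f e using assms by (simp add: log2_half)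
  then have "frac (- log 2 (1 - f01 s)) = frac (- log 2 (1-s))" by (simp only: frac_1_eq)
  then have "vt (f01 s) = vt s" unfolding vt_def by simp
  moreover have "f01 s > 0" using f assms by auto
  ultimately show ?thesis unfolding dd_def using assms by auto
qed

lemma dd_f01_bot: assumes "-1 < s" "s < - 1/2" shows "dd m (f01 s) = dd m s"
proof -
  have f: "f01 s = 2 * s + 1" using assms unfolding f01_def by auto
  have e: "1 + (2 * s + 1) = 2 * (1+s)" by (simp add: field_simps)
  have "log 2 (1 + f01 s) = log 2 (1+s) + 1" unfolding f e by (rule log2_double) (use assms in simp)
  then have "frac (log 2 (1 + f01 s)) = frac (log 2 (1+s))" by (simp only: frac_1_eq)
  then have "vb (f01 s) = vb s" unfolding vb_def by simp
  moreover have "f01 s \<le> 0" using f assms by auto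
  ultimately show ?thesis unfolding dd_def using assms by auto
qed

lemma tau_big_top: assumes "0 \<le> s" "s < 1" "1 - s < 2 powr (-T)" shows "tau s > T"
proof -
  have "log 2 (1-s) < log 2 (2 powr (-T))" using assms by (subst log_less_cancel_iff) auto
  then show ?thesis using tau_top[OF assms(1,2)] by simp
qed

lemma tau_big_bot: assumes "-1 < s" "s \<le> 0" "1 + s < 2 powr (-(T+1))" shows "tau s > T"
proof -
  have "log 2 (1+s) < log 2 (2 powr (-(T+1)))" using assms by (subst log_less_cancel_iff) auto
  then show ?thesis using tau_bot[OF assms(1,2)] by simp
qed

locale cons =
  fixes BW BA :: "nat \<Rightarrow> real \<Rightarrow> real"
  assumes BW_range: "\<And>j t. BW j t \<in> {-1..1}" and BA_range: "\<And>j t. BA j t \<in> {-1..1}"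
    and BW_cont: "\<And>j. continuous_on UNIV (BW j)" and BA_cont: "\<And>j. continuous_on UNIV (BA j)"
    and BW_lip: "\<And>j t t'. \<bar>BW j t - BW j t'\<bar> \<le> 4 * \<bar>t - t'\<bar>"
    and BA_lip: "\<And>j t t'. \<bar>BA j t - BA j t'\<bar> \<le> 4 * \<bar>t - t'\<bar>"
begin

definition Pp :: "real \<Rightarrow> real \<Rightarrow> real" where "Pp s r = Pf (gam BW BA s) (Kf s) r"

lemma gam_rng: "gam BW BA s \<in> {-1..1}" using gam_range[OF BW_range BA_range] .

lemma Pp_mono: "r1 \<in> {-1..1} \<Longrightarrow> r2 \<in> {-1..1} \<Longrightarrow> r1 < r2 \<Longrightarrow> Pp s r1 < Pp s r2"
  unfolding Pp_def using Pf_mono[OF Kf_ge1 gam_rng] by auto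

lemma Pp_end[simp]: "Pp s 1 = 1" "Pp s (-1) = -1"
  unfolding Pp_def using Pf_end[OF Kf_ge1] by auto

lemma Pp_range: "r \<in> {-1..1} \<Longrightarrow> Pp s r \<in> {-1..1}"
  unfolding Pp_def using Pf_range[OF Kf_ge1 gam_rng] by auto

lemma denA': "x \<in> {-1..1} \<Longrightarrow> Kf s * (1 + x) + (1 - x) \<noteq> 0"
  using denA[OF Kf_ge1, of x s] by auto
lemma denB': "x \<in> {-1..1} \<Longrightarrow> Kf s * (1 - x) + (1 + x) \<noteq> 0"
  using denB[OF Kf_ge1, of x s] by auto

lemma Pp_cont_r: "continuous_on {-1..1} (Pp s)"
  unfolding Pp_def[abs_def] Pf_def AA_def BB_def
  by (intro continuous_intros) (auto simp: denA' denB')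

lemma Pp_cont2: "continuous_on ({-1<..<1} \<times> {-1..1}) (\<lambda>p. Pp (fst p) (snd p))"
proof -
  have g: "continuous_on ({-1<..<1} \<times> {-1..1}) (\<lambda>p. gam BW BA (fst p))"
    by (rule continuous_on_compose2[OF gam_cont[OF BW_cont BA_cont]]) (auto intro!: continuous_intros)
  have k: "continuous_on ({-1<..<1} \<times> {-1..1}) (\<lambda>p. Kf (fst p))"
    by (rule continuous_on_compose2[OF cont_Kf]) (auto intro!: continuous_intros)
  have d1: "\<forall>p\<in>{-1<..<1} \<times> {-1..1}. Kf (fst p) * (1 + snd p) + (1 - snd p) \<noteq> 0"
    using denA' by auto
  have d2: "\<forall>p\<in>{-1<..<1} \<times> {-1..1}. Kf (fst p) * (1 - snd p) + (1 + snd p) \<noteq> 0"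
    using denB' by auto
  show ?thesis unfolding Pp_def Pf_def AA_def BB_def
    using d1 d2 by (intro continuous_intros g k) auto
qed

lemma Pp_inj: "x \<in> {-1..1} \<Longrightarrow> x' \<in> {-1..1} \<Longrightarrow> Pp s x = Pp s x' \<Longrightarrow> x = x'"
  using Pp_mono[of x x' s] Pp_mono[of x' x s] by (cases x x' rule: linorder_cases) auto

lemma Pp_ex1: assumes "y \<in> {-1..1}" shows "\<exists>!x. x \<in> {-1..1} \<and> Pp s x = y"
proof -
  obtain x where "-1 \<le> x" "x \<le> 1" "Pp s x = y"
    using IVT'[of "Pp s" "-1" y 1] assms Pp_cont_r[of s] by auto
  show ?thesis
  proof (rule ex1I[of _ x])
    show "x \<in> {-1..1} \<and> Pp s x = y" using \<open>-1 \<le> x\<close> \<open>x \<le> 1\<close> \<open>Pp s x = y\<close> by auto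
    fix x' assume "x' \<in> {-1..1} \<and> Pp s x' = y"
    then show "x' = x" using Pp_inj[of x' x s] \<open>-1 \<le> x\<close> \<open>x \<le> 1\<close> \<open>Pp s x = y\<close> by auto
  qed
qed

definition Q :: "real \<Rightarrow> real \<Rightarrow> real" where "Q s y = (THE x. x \<in> {-1..1} \<and> Pp s x = y)"

lemma Q_in: assumes "y \<in> {-1..1}" shows "Q s y \<in> {-1..1}" "Pp s (Q s y) = y"
  using theI'[OF Pp_ex1[OF assms, of s]] unfolding Q_def by auto

lemma Q_Pp[simp]: assumes "x \<in> {-1..1}" shows "Q s (Pp s x) = x"
  unfolding Q_def using Pp_range[OF assms] assms Pp_ex1 by (intro the1_equality) auto

lemma Q_end[simp]: "Q s 1 = 1" "Q s (-1) = -1"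
  using Q_Pp[of 1 s] Q_Pp[of "-1" s] by auto

lemma Q_open: assumes "y \<in> {-1<..<1}" shows "Q s y \<in> {-1<..<1}"
proof -
  have "Q s y \<in> {-1..1}" "Pp s (Q s y) = y" using Q_in assms by auto
  moreover have "Q s y \<noteq> 1" "Q s y \<noteq> -1" using calculation assms by auto
  ultimately show ?thesis by auto
qed

lemma Q_cont: assumes "0 \<le> c" "c < 1"
  shows "continuous_on ({-1..1} \<times> {-c..c}) (\<lambda>p. Q (snd p) (fst p))"
proof -
  define S where "S = {-1..1::real} \<times> {-c..c}"
  define Psi where "Psi p = (Pp (snd p) (fst p), snd p)" for p :: "real \<times> real"
  have cS: "compact S" unfolding S_def by (intro compact_Times) auto
  have cPsi: "continuous_on S Psi"
  proof -
    have "continuous_on S (\<lambda>p. Pp (fst (snd p, fst p)) (snd (snd p, fst p)))"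
      by (rule continuous_on_compose2[OF Pp_cont2]) (use assms in \<open>auto simp: S_def intro!: continuous_intros\<close>)
    then show ?thesis unfolding Psi_def by (auto intro!: continuous_intros)
  qed
  have im: "Psi ` S = S"
  proof
    show "Psi ` S \<subseteq> S" unfolding S_def Psi_def using Pp_range by auto
    show "S \<subseteq> Psi ` S"
    proof
      fix p assume p: "p \<in> S"
      then have "(Q (snd p) (fst p), snd p) \<in> S" "Psi (Q (snd p) (fst p), snd p) = p"
        unfolding S_def Psi_def using Q_in by auto
      then show "p \<in> Psi ` S" by force
    qed
  qed
  have inj: "inj_on Psi S" unfolding inj_on_def S_def Psi_def using Pp_inj by auto
  obtain g where g: "homeomorphism S S Psi g" using homeomorphism_compact[OF cS cPsi im inj] by blast
  have geq: "g p = (Q (snd p) (fst p), snd p)" if p: "p \<in> S" for p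
  proof -
    have q: "(Q (snd p) (fst p), snd p) \<in> S" "Psi (Q (snd p) (fst p), snd p) = p"
      using p unfolding S_def Psi_def using Q_in by auto
    then show ?thesis using g unfolding homeomorphism_def by metis
  qed
  have "continuous_on S g" using g unfolding homeomorphism_def by auto
  then have "continuous_on S (\<lambda>p. fst (g p))" by (intro continuous_intros)
  then show ?thesis unfolding S_def[symmetric] by (rule continuous_on_eq) (auto simp: geq)
qed

definition H1 :: "real \<times> real \<Rightarrow> real" where
  "H1 p = (if snd p \<in> {-1<..<1} then Pp (f01 (snd p)) (Q (snd p) (fst p)) else fst p)"
definition ff :: "real \<times> real \<Rightarrow> real \<times> real" where
  "ff p = (H1 p, f01 (snd p))"
definition G1 :: "real \<times> real \<Rightarrow> real" where
  "G1 p = (if snd p \<in> {-1<..<1} then Pp (f01i (snd p)) (Q (snd p) (fst p)) else fst p)"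
definition gg :: "real \<times> real \<Rightarrow> real \<times> real" where
  "gg p = (G1 p, f01i (snd p))"

lemma f01i_pm1[simp]: "f01i 1 = 1" "f01i (-1) = -1" unfolding f01i_def f01_def by auto
lemma f01i_JJ: "s \<in> {-1..1} \<Longrightarrow> f01i s \<in> {-1..1}" unfolding f01i_def f01_def by auto

lemma sq_iff: "p \<in> sq \<longleftrightarrow> fst p \<in> {-1..1} \<and> snd p \<in> {-1..1}"
  unfolding sq_def JJ_def by (cases p) auto

lemma ff_strip: "s \<in> {-1<..<1} \<Longrightarrow> ff (r, s) = (Pp (f01 s) (Q s r), f01 s)"
  unfolding ff_def H1_def by auto
lemma gg_strip: "s \<in> {-1<..<1} \<Longrightarrow> gg (r, s) = (Pp (f01i s) (Q s r), f01i s)"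
  unfolding gg_def G1_def by auto

lemma ff_sq: "p \<in> sq \<Longrightarrow> ff p \<in> sq"
  unfolding sq_iff ff_def H1_def using Pp_range Q_in f01_JJ[unfolded JJ_def] by auto
lemma gg_sq: "p \<in> sq \<Longrightarrow> gg p \<in> sq"
  unfolding sq_iff gg_def G1_def using Pp_range Q_in f01i_JJ by auto

lemma gg_ff: assumes "p \<in> sq" shows "gg (ff p) = p"
proof (cases "snd p \<in> {-1<..<1}")
  case True
  have r: "fst p \<in> {-1..1}" using assms sq_iff by auto
  have "ff p = (Pp (f01 (snd p)) (Q (snd p) (fst p)), f01 (snd p))" using ff_strip[OF True, of "fst p"] by simp
  moreover have "f01 (snd p) \<in> {-1<..<1}" using f01_range True by auto
  ultimately show ?thesis using gg_strip Q_in[OF r] by (cases p) (auto simp: Q_in[OF r] Pp_range)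
next
  case False
  then have "snd p = 1 \<or> snd p = -1" using assms sq_iff by auto
  then show ?thesis using False unfolding gg_def G1_def ff_def H1_def by (cases p) auto
qed

lemma ff_gg: assumes "p \<in> sq" shows "ff (gg p) = p"
proof (cases "snd p \<in> {-1<..<1}")
  case True
  have r: "fst p \<in> {-1..1}" using assms sq_iff by auto
  have "gg p = (Pp (f01i (snd p)) (Q (snd p) (fst p)), f01i (snd p))" using gg_strip[OF True, of "fst p"] by simp
  moreover have "f01i (snd p) \<in> {-1<..<1}" using f01i_range True by auto
  ultimately show ?thesis using ff_strip Q_in[OF r] by (cases p) (auto simp: Q_in[OF r] Pp_range)
next
  case False
  then have "snd p = 1 \<or> snd p = -1" using assms sq_iff by auto
  then show ?thesis using False unfolding gg_def G1_def ff_def H1_def by (cases p) auto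
qed

lemma ff_image: "ff ` sq = sq"
proof
  show "ff ` sq \<subseteq> sq" using ff_sq by auto
  show "sq \<subseteq> ff ` sq" using ff_gg gg_sq by (metis image_eqI subsetI)
qed

lemma ff_inj: "inj_on ff sq"
  by (metis gg_ff inj_onI)

lemma gam_diff:
  assumes "s \<in> {-1<..<1}" "0 < s \<or> s < - 1/2"
  shows "\<bar>gam BW BA (f01 s) - gam BW BA s\<bar> \<le> 6 * \<bar>th (f01 s) - th s\<bar>"
proof -
  define s' where "s' = f01 s"
  have d: "\<And>m. dd m s' = dd m s" unfolding s'_def using assms dd_f01_top dd_f01_bot by auto
  have br: "(s' \<le> 0) = (s \<le> 0)" unfolding s'_def using assms unfolding f01_def by auto
  obtain M :: nat where M: "real M \<ge> max (th s) (th s')" using real_arch_simple by blast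
  have eqs: "gam BW BA s = (if s \<le> 0 then Fr BA M s else Fr BW M s)"
            "gam BW BA s' = (if s \<le> 0 then Fr BA M s' else Fr BW M s')"
    using gam_eq[of s M] gam_eq[of s' M] M br by auto
  have rs: "(\<Sum>m<M. \<bar>ramp m (th s') - ramp m (th s)\<bar>) \<le> \<bar>th s' - th s\<bar>" by (rule ramp_sum_diff)
  have "\<bar>Fr BA M s' - Fr BA M s\<bar> \<le> 4 * \<bar>th s' - th s\<bar> + 2 * (\<Sum>m<M. \<bar>ramp m (th s') - ramp m (th s)\<bar>)"
    by (rule Fr_lip[OF BA_range BA_lip d])
  moreover have "\<bar>Fr BW M s' - Fr BW M s\<bar> \<le> 4 * \<bar>th s' - th s\<bar> + 2 * (\<Sum>m<M. \<bar>ramp m (th s') - ramp m (th s)\<bar>)"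
    by (rule Fr_lip[OF BW_range BW_lip d])
  ultimately show ?thesis using rs unfolding s'_def[symmetric] eqs by auto
qed

lemma edge_bound:
  assumes r: "r \<in> {-1..1}" and s: "s \<in> {-1<..<1}" "0 < s \<or> s < - 1/2" and t: "tau s \<ge> 1"
  shows "\<bar>H1 (r, s) - r\<bar> \<le> 8 / sqrt (tau s)"
proof -
  have s0: "0 \<le> s \<or> s < - 1/2" using s by auto
  define x where "x = Q s r"
  have x: "x \<in> {-1..1}" "Pp s x = r" unfolding x_def using Q_in[OF r] by auto
  have H: "H1 (r,s) = Pp (f01 s) x" unfolding H1_def x_def using s by auto
  have "\<bar>Pp s x - Pp (f01 s) x\<bar> \<le> \<bar>gam BW BA s - gam BW BA (f01 s)\<bar> + 2 * \<bar>Kf s - Kf (f01 s)\<bar> / Kf s"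
    unfolding Pp_def by (rule Pf_diff[OF Kf_ge1 Kf_ge1 x(1) gam_rng gam_rng])
  moreover have "\<bar>Kf s - Kf (f01 s)\<bar> \<le> 1" unfolding Kf_def using tau_f01_diff[OF s(1) s0] by auto
  moreover have "\<bar>gam BW BA s - gam BW BA (f01 s)\<bar> \<le> 6 * (1 / sqrt (tau s))"
  proof -
    have "\<bar>th (f01 s) - th s\<bar> \<le> 1 / sqrt (tau s)"
      unfolding th_def using sqrt_diff_bound[of "tau s" "tau (f01 s)"] t tau_f01_diff[OF s(1) s0] tau_nonneg
      by (auto simp: abs_minus_commute)
    then show ?thesis using gam_diff[OF s] by (auto simp: abs_minus_commute)
  qed
  moreover have "2 * 1 / Kf s \<le> 2 / sqrt (tau s)"
  proof -
    have o: "1 \<le> sqrt (tau s)" using t by simp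
    have "sqrt (tau s) * 1 \<le> sqrt (tau s) * sqrt (tau s)" using o by (intro mult_left_mono) auto
    then have "sqrt (tau s) \<le> tau s" using tau_nonneg[of s] by simp
    then have "sqrt (tau s) \<le> Kf s" unfolding Kf_def by auto
    moreover have "sqrt (tau s) > 0" using t by auto
    ultimately show ?thesis using Kf_ge1[of s] by (simp add: divide_simps)
  qed
  moreover have "2 * \<bar>Kf s - Kf (f01 s)\<bar> / Kf s \<le> 2 * 1 / Kf s"
    using calculation(2) Kf_ge1[of s] by (intro divide_right_mono mult_left_mono) auto
  moreover have "8 / sqrt (tau s) = 6 * (1 / sqrt (tau s)) + 2 / sqrt (tau s)" by simp
  ultimately have "\<bar>Pp s x - Pp (f01 s) x\<bar> \<le> 8 / sqrt (tau s)" by linarith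
  then show ?thesis unfolding H using x by (simp add: abs_minus_commute)
qed

end


context cons begin

lemma H1_cont: "continuous_on sq H1"
  unfolding continuous_on_iff
proof (intro ballI allI impI)
  fix x :: "real \<times> real" and e :: real
  assume x: "x \<in> sq" and e: "e > 0"
  obtain r0 s0 where x0: "x = (r0, s0)" by (cases x)
  have r0: "r0 \<in> {-1..1}" "s0 \<in> {-1..1}" using x x0 sq_iff by auto
  consider "s0 \<in> {-1<..<1}" | "s0 = 1" | "s0 = -1" using r0 by force
  then show "\<exists>d>0. \<forall>x'\<in>sq. dist x' x < d \<longrightarrow> dist (H1 x') (H1 x) < e"
  proof cases
    case 1
    define c where "c = (1 + \<bar>s0\<bar>)/2"
    have c: "0 \<le> c" "c < 1" "\<bar>s0\<bar> < c" using 1 unfolding c_def by auto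
    define T where "T = {-1..1::real} \<times> {-c..c}"
    define G where "G p = Pp (f01 (snd p)) (Q (snd p) (fst p))" for p :: "real \<times> real"
    have a: "continuous_on T (\<lambda>p. (f01 (snd p), Q (snd p) (fst p)))"
      unfolding T_def
      by (intro continuous_on_Pair Q_cont[OF c(1,2)] continuous_on_compose2[OF cont_f01[of UNIV]]
            continuous_on_snd) auto
    have im: "(\<lambda>p. (f01 (snd p), Q (snd p) (fst p))) ` T \<subseteq> {-1<..<1} \<times> {-1..1}"
    proof
      fix y assume "y \<in> (\<lambda>p. (f01 (snd p), Q (snd p) (fst p))) ` T"
      then obtain p where p: "p \<in> T" "y = (f01 (snd p), Q (snd p) (fst p))" by auto
      have "snd p \<in> {-1<..<1}" "fst p \<in> {-1..1}" using p c unfolding T_def by auto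
      then show "y \<in> {-1<..<1} \<times> {-1..1}" using p f01_range Q_in by auto
    qed
    have cG: "continuous_on T G"
    proof -
      have "continuous_on T (\<lambda>p. Pp (fst (f01 (snd p), Q (snd p) (fst p))) (snd (f01 (snd p), Q (snd p) (fst p))))"
        by (rule continuous_on_compose2[OF Pp_cont2 a im])
      then show ?thesis unfolding G_def by simp
    qed
    have xT: "x \<in> T" using x0 r0 c unfolding T_def by auto
    obtain d1 where d1: "d1 > 0" "\<forall>x'\<in>T. dist x' x < d1 \<longrightarrow> dist (G x') (G x) < e"
      using cG xT e unfolding continuous_on_iff by blast
    show ?thesis
    proof (intro exI[of _ "min d1 (c - \<bar>s0\<bar>)"] conjI ballI impI)
      show "min d1 (c - \<bar>s0\<bar>) > 0" using d1 c by auto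
      fix x' assume x': "x' \<in> sq" "dist x' x < min d1 (c - \<bar>s0\<bar>)"
      have "\<bar>snd x' - s0\<bar> < c - \<bar>s0\<bar>" using dist_snd_le[of x' x] x' x0 by (auto simp: dist_real_def)
      then have sx: "\<bar>snd x'\<bar> < c" by auto
      then have "x' \<in> T" using x' sq_iff unfolding T_def by (cases x') auto
      then have "dist (G x') (G x) < e" using d1 x' by auto
      moreover have "H1 x' = G x'" "H1 x = G x" unfolding H1_def G_def using sx c 1 x0 by auto
      ultimately show "dist (H1 x') (H1 x) < e" by simp
    qed
  next
    case 2
    define T where "T = max 1 ((16/e)^2)"
    have T1: "T \<ge> 1" unfolding T_def by auto
    have "sqrt T \<ge> sqrt ((16/e)^2)" unfolding T_def by (intro real_sqrt_le_mono) auto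
    then have sT: "sqrt T \<ge> 16/e" using e by simp
    have bT: "8 / sqrt T \<le> e/2"
    proof -
      have "16/e > 0" using e by auto
      moreover have "sqrt T > 0" using sT \<open>16/e > 0\<close> by linarith
      ultimately have "8 / sqrt T \<le> 8 / (16/e)" using sT by (intro divide_left_mono) auto
      then show ?thesis using e by simp
    qed
    have pT: "2 powr (-T) \<le> 1/2"
    proof -
      have "2 powr (-T) \<le> 2 powr (-1)" using T1 by (intro powr_mono) auto
      then show ?thesis by (simp add: powr_minus)
    qed
    show ?thesis
    proof (intro exI[of _ "min (e/2) (2 powr (-T))"] conjI ballI impI)
      show "min (e/2) (2 powr (-T)) > 0" using e by auto
      fix x' assume x': "x' \<in> sq" "dist x' x < min (e/2) (2 powr (-T))"
      obtain r s where rs: "x' = (r, s)" by (cases x')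
      have r: "r \<in> {-1..1}" "s \<in> {-1..1}" using x' rs sq_iff by auto
      have dr: "\<bar>r - r0\<bar> < e/2" using dist_fst_le[of x' x] x' x0 rs by (auto simp: dist_real_def)
      have ds: "\<bar>s - 1\<bar> < 2 powr (-T)" using dist_snd_le[of x' x] x' x0 rs 2 by (auto simp: dist_real_def)
      have Hx: "H1 x = r0" unfolding H1_def using x0 2 by auto
      show "dist (H1 x') (H1 x) < e"
      proof (cases "s = 1")
        case True
        then have "H1 x' = r" unfolding H1_def using rs by auto
        then show ?thesis using Hx dr e by (simp add: dist_real_def)
      next
        case False
        then have s: "s < 1" "s > 1/2" using r ds pT by auto
        have tT: "tau s > T" by (rule tau_big_top) (use s ds in auto)
        have "\<bar>H1 (r, s) - r\<bar> \<le> 8 / sqrt (tau s)"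
          by (rule edge_bound) (use r s tT T1 in auto)
        also have "\<dots> \<le> 8 / sqrt T" using tT T1 by (intro divide_left_mono) auto
        finally have "\<bar>H1 (r, s) - r\<bar> \<le> e/2" using bT by linarith
        then show ?thesis using Hx dr rs abs_triangle_ineq[of "H1 (r,s) - r" "r - r0"] by (simp add: dist_real_def)
      qed
    qed
  next
    case 3
    define T where "T = max 1 ((16/e)^2)"
    have T1: "T \<ge> 1" unfolding T_def by auto
    have "sqrt T \<ge> sqrt ((16/e)^2)" unfolding T_def by (intro real_sqrt_le_mono) auto
    then have sT: "sqrt T \<ge> 16/e" using e by simp
    have bT: "8 / sqrt T \<le> e/2"
    proof -
      have "16/e > 0" using e by auto
      moreover have "sqrt T > 0" using sT \<open>16/e > 0\<close> by linarith
      ultimately have "8 / sqrt T \<le> 8 / (16/e)" using sT by (intro divide_left_mono) auto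
      then show ?thesis using e by simp
    qed
    have pT: "2 powr (-(T+1)) \<le> 1/4"
    proof -
      have "2 powr (-(T+1)) \<le> 2 powr (-2)" using T1 by (intro powr_mono) auto
      then show ?thesis by (simp add: powr_minus)
    qed
    show ?thesis
    proof (intro exI[of _ "min (e/2) (2 powr (-(T+1)))"] conjI ballI impI)
      show "min (e/2) (2 powr (-(T+1))) > 0" using e by auto
      fix x' assume x': "x' \<in> sq" "dist x' x < min (e/2) (2 powr (-(T+1)))"
      obtain r s where rs: "x' = (r, s)" by (cases x')
      have r: "r \<in> {-1..1}" "s \<in> {-1..1}" using x' rs sq_iff by auto
      have dr: "\<bar>r - r0\<bar> < e/2" using dist_fst_le[of x' x] x' x0 rs by (auto simp: dist_real_def)
      have ds: "\<bar>s + 1\<bar> < 2 powr (-(T+1))" using dist_snd_le[of x' x] x' x0 rs 3 by (auto simp: dist_real_def)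
      have Hx: "H1 x = r0" unfolding H1_def using x0 3 by auto
      show "dist (H1 x') (H1 x) < e"
      proof (cases "s = -1")
        case True
        then have "H1 x' = r" unfolding H1_def using rs by auto
        then show ?thesis using Hx dr e by (simp add: dist_real_def)
      next
        case False
        then have s: "s > -1" "s < - 3/4" using r ds pT by auto
        have tT: "tau s > T" by (rule tau_big_bot) (use s ds in auto)
        have "\<bar>H1 (r, s) - r\<bar> \<le> 8 / sqrt (tau s)"
          by (rule edge_bound) (use r s tT T1 in auto)
        also have "\<dots> \<le> 8 / sqrt T" using tT T1 by (intro divide_left_mono) auto
        finally have "\<bar>H1 (r, s) - r\<bar> \<le> e/2" using bT by linarith
        then show ?thesis using Hx dr rs abs_triangle_ineq[of "H1 (r,s) - r" "r - r0"] by (simp add: dist_real_def)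
      qed
    qed
  qed
qed

lemma ff_cont: "continuous_on sq ff"
  unfolding ff_def[abs_def]
  by (intro continuous_on_Pair H1_cont continuous_on_compose2[OF cont_f01[of UNIV] continuous_on_snd]) auto

lemma compact_sq: "compact sq" unfolding sq_def JJ_def by (intro compact_Times) auto

lemma ff_homeo: "\<exists>g. homeomorphism sq sq ff g"
  by (rule homeomorphism_compact[OF compact_sq ff_cont ff_image ff_inj])

lemma interior_sq: "interior sq = {-1<..<1} \<times> {-1<..<1}"
  unfolding sq_def JJ_def interior_Times by simp

lemma closure_sq: "closure sq = sq"
  unfolding sq_def JJ_def by (intro closure_closed closed_Times) auto

lemma ff_nr: "normally_rising ff"
  unfolding normally_rising_def
proof (intro conjI ff_homeo ballI)
  fix p assume p: "p \<in> frontier sq"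
  then have p1: "p \<in> sq" "p \<notin> {-1<..<1} \<times> {-1<..<1}"
    unfolding frontier_def closure_sq interior_sq by auto
  obtain r s where rs: "p = (r, s)" by (cases p)
  show "ff p = f02 p"
  proof (cases "s \<in> {-1<..<1}")
    case True
    then have "r = 1 \<or> r = -1" using p1 rs sq_iff by auto
    then show ?thesis using True rs unfolding ff_def H1_def f02_def by auto
  next
    case False
    then show ?thesis using rs unfolding ff_def H1_def f02_def by auto
  qed
next
  fix s assume s: "s \<in> JJ"
  have f02i: "f02 ` Jline s = JJ \<times> {f01 s}"
    unfolding Jline_def f02_def by (auto simp: image_iff)
  have "ff ` Jline s = JJ \<times> {f01 s}"
  proof (cases "s \<in> {-1<..<1}")
    case True
    show ?thesis
    proof
      show "ff ` Jline s \<subseteq> JJ \<times> {f01 s}"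
        unfolding Jline_def using ff_strip[OF True] Pp_range Q_in by (auto simp: JJ_def)
      show "JJ \<times> {f01 s} \<subseteq> ff ` Jline s"
      proof
        fix y assume "y \<in> JJ \<times> {f01 s}"
        then obtain z where z: "y = (z, f01 s)" "z \<in> {-1..1}" unfolding JJ_def by auto
        define r where "r = Pp s (Q (f01 s) z)"
        have r: "r \<in> JJ" "Q s r = Q (f01 s) z" unfolding r_def JJ_def using Q_in[OF z(2)] Pp_range by auto
        have "ff (r, s) = y" using ff_strip[OF True, of r] r z Q_in[OF z(2)] by auto
        then show "y \<in> ff ` Jline s" unfolding Jline_def using r by force
      qed
    qed
  next
    case False
    then have "\<And>r. ff (r, s) = (r, f01 s)" unfolding ff_def H1_def by auto
    then show ?thesis unfolding Jline_def by (auto simp: image_iff)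
  qed
  then show "ff ` Jline s = f02 ` Jline s" using f02i by simp
qed

lemma f01_iter_range: "s \<in> {-1<..<1} \<Longrightarrow> (f01 ^^ k) s \<in> {-1<..<1}"
proof (induction k)
  case (Suc k) then show ?case using f01_range[of "(f01 ^^ k) s"] by simp
qed simp
lemma f01i_iter_range: "s \<in> {-1<..<1} \<Longrightarrow> (f01i ^^ k) s \<in> {-1<..<1}"
proof (induction k)
  case (Suc k) then show ?case using f01i_range[of "(f01i ^^ k) s"] by simp
qed simp

lemma ff_iter: assumes "r \<in> {-1..1}" "s \<in> {-1<..<1}"
  shows "(ff ^^ k) (r, s) = (Pp ((f01 ^^ k) s) (Q s r), (f01 ^^ k) s)"
proof (induction k)
  case 0 then show ?case using Q_in[OF assms(1)] by simp
next
  case (Suc k)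
  have "(f01 ^^ k) s \<in> {-1<..<1}" using f01_iter_range[OF assms(2)] .
  then show ?case using Suc ff_strip Q_in[OF assms(1)] by simp
qed

lemma gg_iter: assumes "r \<in> {-1..1}" "s \<in> {-1<..<1}"
  shows "(gg ^^ k) (r, s) = (Pp ((f01i ^^ k) s) (Q s r), (f01i ^^ k) s)"
proof (induction k)
  case 0 then show ?case using Q_in[OF assms(1)] by simp
next
  case (Suc k)
  have "(f01i ^^ k) s \<in> {-1<..<1}" using f01i_iter_range[OF assms(2)] .
  then show ?case using Suc gg_strip Q_in[OF assms(1)] by simp
qed

lemma inv_ff: "p \<in> sq \<Longrightarrow> inv_into sq ff p = gg p"
  by (rule inv_into_f_eq[OF ff_inj gg_sq ff_gg])

lemma inv_iter: "p \<in> sq \<Longrightarrow> ((inv_into sq ff) ^^ k) p = (gg ^^ k) p"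
proof (induction k)
  case (Suc k)
  have "(gg ^^ k) p \<in> sq" using Suc.prems by (induction k) (auto intro: gg_sq)
  then show ?case using Suc by (simp add: inv_ff)
qed simp

end


definition Otop :: "real \<Rightarrow> nat \<Rightarrow> real" where "Otop v k = 1 - (2 - v) / 2^(k+1)"
definition Obot :: "real \<Rightarrow> nat \<Rightarrow> real" where "Obot v k = -1 + (1 + v) / 2^(k+1)"

lemma pow2_ge1: "(1::real) \<le> 2^k" by simp
lemma log2_2pow[simp]: "log 2 (2 * (2::real)^k) = 1 + real k"
  by (simp add: log_mult)
lemma f01_nonneg: "0 \<le> x \<Longrightarrow> f01 x = (x+1)/2" unfolding f01_def by auto
lemma f01_mid: "- 1/2 \<le> x \<Longrightarrow> x < 0 \<Longrightarrow> f01 x = x + 1/2" unfolding f01_def by auto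
lemma f01_low: "x < - 1/2 \<Longrightarrow> f01 x = 2 * x + 1" unfolding f01_def by auto

lemma pow2_ge2: "(2::real)^(k+1) \<ge> 2"
proof -
  have "(2::real)^(k+1) = 2 * 2^k" by simp
  moreover have "(2::real)^k \<ge> 1" by simp
  ultimately show ?thesis by linarith
qed

lemma Otop_range: assumes "0 < v" "v < 1" shows "0 < Otop v k" "Otop v k < 1"
proof -
  have "(2 - v) / 2^(k+1) < 1" using pow2_ge1[of k] assms by (simp add: divide_simps; linarith)
  moreover have "(2 - v) / 2^(k+1) > 0" using assms by simp
  ultimately show "0 < Otop v k" "Otop v k < 1" unfolding Otop_def by auto
qed

lemma Obot_range: assumes "0 < v" "v < 1" shows "-1 < Obot v k" "Obot v k < 0"
proof -
  have "(1 + v) / 2^(k+1) < 1" using pow2_ge1[of k] assms by (simp add: divide_simps; linarith)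
  moreover have "(1 + v) / 2^(k+1) > 0" using assms by simp
  ultimately show "-1 < Obot v k" "Obot v k < 0" unfolding Obot_def by auto
qed

lemma ObotS_lt: assumes "0 < v" "v < 1" shows "Obot v (Suc k) < - 1/2"
proof -
  have p: "(2::real)^(Suc k + 1) = 4 * 2^k" by simp
  have "(1+v) < 2 * 2^k" using pow2_ge1[of k] assms by linarith
  then have "(1 + v)/(4*2^k) < 1/2" by (simp add: divide_simps)
  then show ?thesis unfolding Obot_def p by linarith
qed

lemma f01_Otop: assumes "0 < v" "v < 1" shows "f01 (Otop v k) = Otop v (Suc k)"
  using f01_nonneg[of "Otop v k"] Otop_range[OF assms, of k] unfolding Otop_def by (simp add: field_simps)

lemma f01_Obot0: assumes "0 < v" "v < 1" shows "f01 (Obot v 0) = Otop v 0"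
proof -
  have "Obot v 0 = (v - 1)/2" unfolding Obot_def by (simp add: field_simps)
  then show ?thesis using f01_mid[of "Obot v 0"] assms unfolding Otop_def by (simp add: field_simps)
qed

lemma f01_ObotS: assumes "0 < v" "v < 1" shows "f01 (Obot v (Suc k)) = Obot v k"
  using f01_low[OF ObotS_lt[OF assms, of k]] unfolding Obot_def by (simp add: field_simps)

lemma f01i_OtopS: assumes "0 < v" "v < 1" shows "f01i (Otop v (Suc k)) = Otop v k"
  using f01_Otop[OF assms, of k] f01i_f01 by metis
lemma f01i_Otop0: assumes "0 < v" "v < 1" shows "f01i (Otop v 0) = Obot v 0"
  using f01_Obot0[OF assms] f01i_f01 by metis
lemma f01i_Obot: assumes "0 < v" "v < 1" shows "f01i (Obot v k) = Obot v (Suc k)"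
  using f01_ObotS[OF assms, of k] f01i_f01 by metis

lemma iter_Otop: assumes "0 < v" "v < 1" shows "(f01 ^^ k) (Otop v j) = Otop v (j + k)"
  by (induction k) (auto simp: f01_Otop[OF assms])

lemma iter_Obot_aux: assumes "0 < v" "v < 1" shows "(f01 ^^ Suc j) (Obot v j) = Otop v 0"
proof (induction j)
  case 0 then show ?case using f01_Obot0[OF assms] by simp
next
  case (Suc j)
  have "(f01 ^^ Suc (Suc j)) (Obot v (Suc j)) = (f01 ^^ Suc j) (f01 (Obot v (Suc j)))"
    by (simp only: funpow_Suc_right o_def)
  then show ?case using Suc f01_ObotS[OF assms] by simp
qed

lemma iter_Obot: assumes "0 < v" "v < 1" shows "(f01 ^^ (k + Suc j)) (Obot v j) = Otop v k"
proof -
  have "(f01 ^^ (k + Suc j)) (Obot v j) = (f01 ^^ k) ((f01 ^^ Suc j) (Obot v j))"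
    by (simp only: funpow_add o_def)
  then show ?thesis using iter_Obot_aux[OF assms] iter_Otop[OF assms, of k 0] by simp
qed

lemma iteri_Obot: assumes "0 < v" "v < 1" shows "(f01i ^^ k) (Obot v j) = Obot v (j + k)"
  by (induction k) (auto simp: f01i_Obot[OF assms])

lemma iteri_Otop_aux: assumes "0 < v" "v < 1" shows "(f01i ^^ Suc j) (Otop v j) = Obot v 0"
proof (induction j)
  case 0 then show ?case using f01i_Otop0[OF assms] by simp
next
  case (Suc j)
  have "(f01i ^^ Suc (Suc j)) (Otop v (Suc j)) = (f01i ^^ Suc j) (f01i (Otop v (Suc j)))"
    by (simp only: funpow_Suc_right o_def)
  then show ?case using Suc f01i_OtopS[OF assms] by simp
qed

lemma iteri_Otop: assumes "0 < v" "v < 1" shows "(f01i ^^ (k + Suc j)) (Otop v j) = Obot v k"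
proof -
  have "(f01i ^^ (k + Suc j)) (Otop v j) = (f01i ^^ k) ((f01i ^^ Suc j) (Otop v j))"
    by (simp only: funpow_add o_def)
  then show ?thesis using iteri_Otop_aux[OF assms] iteri_Obot[OF assms, of k 0] by simp
qed

lemma log2_pow: "log 2 ((2::real)^n) = real n" by simp

lemma vt_Otop: assumes "0 < v" "v < 1" shows "vt (Otop v k) = v"
proof -
  have e: "1 - Otop v k = (2 - v) / 2^(k+1)" unfolding Otop_def by simp
  have l: "- log 2 ((2 - v) / 2^(k+1)) = real (k+1) - log 2 (2 - v)"
    using assms by (simp add: log_divide)
  have lb: "0 < log 2 (2 - v)" "log 2 (2 - v) < 1"
  proof -
    show "0 < log 2 (2 - v)" using assms by simp
    have "log 2 (2 - v) < log 2 2" using assms by (subst log_less_cancel_iff) auto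
    then show "log 2 (2 - v) < 1" by simp
  qed
  have "frac (real (k+1) - log 2 (2 - v)) = 1 - log 2 (2 - v)"
    unfolding frac_unique_iff using lb by (auto simp: Ints_diff)
  then have "vt (Otop v k) = 2 - 2 powr (log 2 (2 - v))" unfolding vt_def e l by simp
  also have "\<dots> = v" using assms by simp
  finally show ?thesis .
qed

lemma vb_Obot: assumes "0 < v" "v < 1" shows "vb (Obot v k) = v"
proof -
  have e: "1 + Obot v k = (1 + v) / 2^(k+1)" unfolding Obot_def by simp
  have l: "log 2 ((1 + v) / 2^(k+1)) = log 2 (1 + v) - real (k+1)"
    using assms by (simp add: log_divide)
  have lb: "0 < log 2 (1 + v)" "log 2 (1 + v) < 1"
  proof -
    show "0 < log 2 (1 + v)" using assms by simp
    have "log 2 (1 + v) < log 2 2" using assms by (subst log_less_cancel_iff) auto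
    then show "log 2 (1 + v) < 1" by simp
  qed
  have "frac (log 2 (1 + v) - real (k+1)) = log 2 (1 + v)"
    unfolding frac_unique_iff using lb by (auto simp: Ints_diff)
  then have "vb (Obot v k) = 2 powr (log 2 (1 + v)) - 1" unfolding vb_def e l by simp
  also have "\<dots> = v" using assms by simp
  finally show ?thesis .
qed

lemma dd_Otop: assumes "0 < v" "v < 1" shows "dd m (Otop v k) = Dt m v"
  unfolding dd_def using Otop_range[OF assms, of k] vt_Otop[OF assms] by auto
lemma dd_Obot: assumes "0 < v" "v < 1" shows "dd m (Obot v k) = Dt m v"
  unfolding dd_def using Obot_range[OF assms, of k] vb_Obot[OF assms] by auto

lemma tau_Otop: assumes "0 < v" "v < 1" shows "tau (Otop v k) = real k + (1 - log 2 (2 - v))"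
proof -
  have e: "1 - Otop v k = (2 - v) / 2^(k+1)" unfolding Otop_def by simp
  show ?thesis using tau_top[of "Otop v k"] Otop_range[OF assms, of k] unfolding e
    using assms by (simp add: log_divide)
qed

lemma tau_Obot: assumes "0 < v" "v < 1" "k \<ge> 1" shows "tau (Obot v k) = real k - log 2 (1 + v)"
proof -
  have e: "1 + Obot v k = (1 + v) / 2^(k+1)" unfolding Obot_def by simp
  have "log 2 (1 + v) < log 2 2" using assms by (subst log_less_cancel_iff) auto
  then have L: "log 2 (1 + v) < 1" by simp
  have k1: "real k \<ge> 1" using assms by simp
  show ?thesis using tau_bot[of "Obot v k"] Obot_range[OF assms(1,2), of k] L k1 unfolding e
    using assms by (simp add: log_divide max_def)
qed

definition tri :: "real \<Rightarrow> real" where "tri t = (1 - cos (pi * t)) / 2"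

lemma tri_range: "tri t \<in> {0..1}" unfolding tri_def by auto
lemma cont_tri: "continuous_on S tri" unfolding tri_def[abs_def] by (intro continuous_intros) auto

lemma cos_lip: "\<bar>cos x - cos y\<bar> \<le> \<bar>x - y\<bar>" for x y :: real
proof -
  have "\<bar>cos x - cos y\<bar> = 2 * \<bar>sin ((x + y) / 2)\<bar> * \<bar>sin ((y - x) / 2)\<bar>"
    unfolding cos_diff_cos by (simp add: abs_mult)
  also have "\<dots> \<le> 2 * 1 * \<bar>(y - x) / 2\<bar>"
    by (intro mult_mono abs_sin_x_le_abs_x) auto
  finally show ?thesis by (simp add: abs_minus_commute)
qed

lemma tri_lip: "\<bar>tri t - tri t'\<bar> \<le> 2 * \<bar>t - t'\<bar>"
proof -
  have eq: "tri t - tri t' = (cos (pi * t') - cos (pi * t)) / 2" unfolding tri_def by (simp add: field_simps)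
  have "\<bar>tri t - tri t'\<bar> = \<bar>cos (pi * t') - cos (pi * t)\<bar> / 2" unfolding eq abs_divide by simp
  also have "\<dots> \<le> \<bar>pi * t' - pi * t\<bar> / 2" using cos_lip by (intro divide_right_mono) auto
  also have "\<dots> = pi * \<bar>t - t'\<bar> / 2" by (simp add: abs_mult abs_minus_commute right_diff_distrib[symmetric])
  also have "\<dots> \<le> 4 * \<bar>t - t'\<bar> / 2" using pi_less_4 by (intro divide_right_mono mult_right_mono) auto
  finally show ?thesis by simp
qed

lemma cos_2pi_nat: "cos (x + 2 * pi * real m) = cos x"
proof (induction m)
  case (Suc m)
  have "x + 2 * pi * real (Suc m) = (x + 2 * pi * real m) + 2 * pi" by (simp add: algebra_simps)
  then show ?case by (simp only: cos_periodic Suc.IH)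
qed simp

lemma tri_periodic: "tri (t + 2 * real m) = tri t"
proof -
  have "pi * (t + 2 * real m) = pi * t + 2 * pi * real m" by (simp add: algebra_simps)
  then show ?thesis unfolding tri_def using cos_2pi_nat by simp
qed

lemma tri_cluster:
  assumes z: "z \<in> {0..1}" and e: "\<epsilon> > 0"
  shows "\<exists>k\<ge>M. \<bar>tri (sqrt (real k + c)) - z\<bar> < \<epsilon>"
proof -
  define \<phi> where "\<phi> = arccos (1 - 2*z) / pi"
  have tphi: "tri \<phi> = z" unfolding tri_def \<phi>_def using z by simp
  have phi0: "\<phi> \<ge> 0" unfolding \<phi>_def using z arccos_lbound[of "1 - 2*z"] by auto
  define X where "X = max (max 1 (real M + \<bar>c\<bar>)) (4/\<epsilon>)"
  define m where "m = nat \<lceil>X\<rceil>"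
  define x where "x = \<phi> + 2 * real m"
  have mX: "real m \<ge> X" unfolding m_def by linarith
  have xX: "x \<ge> X" unfolding x_def using mX phi0 X_def by auto
  have x1: "x \<ge> 1" using xX unfolding X_def by auto
  have xsq: "x^2 \<ge> x" using x1 by (simp add: power2_eq_square)
  have xM: "x^2 \<ge> real M + \<bar>c\<bar>" using xsq xX unfolding X_def by auto
  define k where "k = nat \<lceil>x^2 - c\<rceil>"
  have k1: "real k \<ge> x^2 - c" "real k < x^2 - c + 1" unfolding k_def using xM by linarith+
  have kM: "k \<ge> M" using k1 xM by linarith
  define y where "y = sqrt (real k + c)"
  have y: "y \<ge> x" unfolding y_def using k1 x1 by (metis add.commute diff_le_eq real_le_rsqrt)
  have y2: "y^2 = real k + c" unfolding y_def using k1 xM by simp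
  have "(y - x) * (y + x) < 1" using y2 k1 by (simp add: algebra_simps power2_eq_square)
  moreover have "y + x \<ge> x" "x > 0" using y x1 by auto
  ultimately have "(y - x) * x < 1"
    by (smt (verit, best) mult_left_mono y)
  then have yx: "y - x < 1 / x" using x1 by (simp add: divide_simps)
  have "\<bar>tri y - z\<bar> = \<bar>tri y - tri x\<bar>" unfolding x_def tri_periodic tphi ..
  also have "\<dots> \<le> 2 * \<bar>y - x\<bar>" by (rule tri_lip)
  also have "\<dots> < 2 * (1 / x)" using yx y by auto
  also have "\<dots> \<le> 2 * (\<epsilon> / 4)"
  proof -
    have "x \<ge> 4 / \<epsilon>" using xX unfolding X_def by auto
    moreover have "0 < x * (4 / \<epsilon>)" using x1 e by simp
    ultimately have "1 / x \<le> 1 / (4 / \<epsilon>)" using e by (intro divide_left_mono) auto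
    then show ?thesis using e by simp
  qed
  finally show ?thesis using kM e unfolding y_def by (intro exI[of _ k]) auto
qed

lemma omega_generic:
  fixes X :: "nat \<Rightarrow> real \<times> real" and C :: "nat \<Rightarrow> real"
  assumes H1: "(\<lambda>k. snd (X k)) \<longlonglongrightarrow> e" and H2: "(\<lambda>k. fst (X k) - C k) \<longlonglongrightarrow> 0"
    and H3: "\<And>k. C k \<in> {a..b}" and H4: "\<And>y \<epsilon> M. y \<in> {a..b} \<Longrightarrow> \<epsilon> > 0 \<Longrightarrow> \<exists>k\<ge>M. \<bar>C k - y\<bar> < \<epsilon>"
  shows "{y. \<exists>n::nat\<Rightarrow>nat. strict_mono n \<and> (\<forall>i. 0 < n i) \<and> ((\<lambda>i. X (n i)) \<longlonglongrightarrow> y)} = {a..b} \<times> {e}"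
proof
  show "{y. \<exists>n::nat\<Rightarrow>nat. strict_mono n \<and> (\<forall>i. 0 < n i) \<and> ((\<lambda>i. X (n i)) \<longlonglongrightarrow> y)} \<subseteq> {a..b} \<times> {e}"
  proof
    fix y assume "y \<in> {y. \<exists>n::nat\<Rightarrow>nat. strict_mono n \<and> (\<forall>i. 0 < n i) \<and> ((\<lambda>i. X (n i)) \<longlonglongrightarrow> y)}"
    then obtain n where n: "strict_mono n" "(\<lambda>i. X (n i)) \<longlonglongrightarrow> y" by auto
    have s1: "(\<lambda>i. snd (X (n i))) \<longlonglongrightarrow> e" using LIMSEQ_subseq_LIMSEQ[OF H1 n(1)] by (simp add: o_def)
    have s2: "(\<lambda>i. snd (X (n i))) \<longlonglongrightarrow> snd y" using tendsto_snd[OF n(2)] .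
    have "snd y = e" using LIMSEQ_unique[OF s2 s1] .
    have d: "(\<lambda>i. fst (X (n i)) - C (n i)) \<longlonglongrightarrow> 0" using LIMSEQ_subseq_LIMSEQ[OF H2 n(1)] by (simp add: o_def)
    have "(\<lambda>i. fst (X (n i)) - (fst (X (n i)) - C (n i))) \<longlonglongrightarrow> fst y - 0"
      by (intro tendsto_diff tendsto_fst[OF n(2)] d)
    then have c: "(\<lambda>i. C (n i)) \<longlonglongrightarrow> fst y" by simp
    have "a \<le> fst y" by (rule LIMSEQ_le_const[OF c]) (use H3 in auto)
    moreover have "fst y \<le> b" by (rule LIMSEQ_le_const2[OF c]) (use H3 in auto)
    ultimately show "y \<in> {a..b} \<times> {e}" using \<open>snd y = e\<close> by (cases y) auto
  qed
next
  show "{a..b} \<times> {e} \<subseteq> {y. \<exists>n::nat\<Rightarrow>nat. strict_mono n \<and> (\<forall>i. 0 < n i) \<and> ((\<lambda>i. X (n i)) \<longlonglongrightarrow> y)}"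
  proof
    fix y assume y: "y \<in> {a..b} \<times> {e}"
    obtain x where x: "y = (x, e)" "x \<in> {a..b}" using y by auto
    have "\<forall>M i. \<exists>k. k \<ge> M \<and> \<bar>C k - x\<bar> < inverse (real (Suc i))"
      using H4[OF x(2)] by auto
    then obtain pick where pick: "\<And>M i. pick M i \<ge> M" "\<And>M i. \<bar>C (pick M i) - x\<bar> < inverse (real (Suc i))"
      by metis
    define n where "n = rec_nat (pick 1 0) (\<lambda>i ni. pick (Suc ni) (Suc i))"
    have n0: "n 0 = pick 1 0" and nS: "\<And>i. n (Suc i) = pick (Suc (n i)) (Suc i)" unfolding n_def by simp_all
    have sm: "strict_mono n" unfolding strict_mono_Suc_iff using nS pick(1) by (metis Suc_le_lessD)
    have pos: "\<forall>i. 0 < n i"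
    proof
      fix i show "0 < n i" using n0 nS pick(1) by (cases i) (auto intro: less_le_trans[OF zero_less_Suc])
    qed
    have close: "\<bar>C (n i) - x\<bar> < inverse (real (Suc i))" for i
    proof (cases i)
      case 0 then show ?thesis using n0 pick(2)[of 1 0] by simp
    next
      case (Suc j) then show ?thesis using nS[of j] pick(2)[of "Suc (n j)" "Suc j"] by simp
    qed
    have "(\<lambda>i. C (n i) - x) \<longlonglongrightarrow> 0"
      by (rule Lim_null_comparison[OF always_eventually LIMSEQ_inverse_real_of_nat]) (use close less_imp_le in auto)
    then have c: "(\<lambda>i. C (n i)) \<longlonglongrightarrow> x" by (simp add: LIM_zero_iff)
    have d: "(\<lambda>i. fst (X (n i)) - C (n i)) \<longlonglongrightarrow> 0" using LIMSEQ_subseq_LIMSEQ[OF H2 sm] by (simp add: o_def)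
    have f: "(\<lambda>i. C (n i) + (fst (X (n i)) - C (n i))) \<longlonglongrightarrow> x + 0" by (intro tendsto_add c d)
    have s: "(\<lambda>i. snd (X (n i))) \<longlonglongrightarrow> e" using LIMSEQ_subseq_LIMSEQ[OF H1 sm] by (simp add: o_def)
    have "(\<lambda>i. (fst (X (n i)), snd (X (n i)))) \<longlonglongrightarrow> (x, e)" using tendsto_Pair[OF f s] by simp
    then have "(\<lambda>i. X (n i)) \<longlonglongrightarrow> y" using x by simp
    then show "y \<in> {y. \<exists>n::nat\<Rightarrow>nat. strict_mono n \<and> (\<forall>i. 0 < n i) \<and> ((\<lambda>i. X (n i)) \<longlonglongrightarrow> y)}"
      using sm pos by auto
  qed
qed



lemma Otop_lim: assumes "0 < v" "v < 1" shows "(\<lambda>k. Otop v (m0 + k)) \<longlonglongrightarrow> 1"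
proof -
  have e: "Otop v (m0 + k) = 1 - ((2 - v) / 2^(m0+1)) * (1/2)^k" for k
    unfolding Otop_def by (simp add: power_add field_simps)
  have "(\<lambda>k. 1 - ((2 - v) / 2^(m0+1)) * (1/2)^k) \<longlonglongrightarrow> 1 - ((2 - v) / 2^(m0+1)) * 0"
    by (intro tendsto_intros LIMSEQ_realpow_zero) auto
  then show ?thesis unfolding e by simp
qed

lemma Obot_lim: assumes "0 < v" "v < 1" shows "(\<lambda>k. Obot v (m0 + k)) \<longlonglongrightarrow> -1"
proof -
  have e: "Obot v (m0 + k) = -1 + ((1 + v) / 2^(m0+1)) * (1/2)^k" for k
    unfolding Obot_def by (simp add: power_add field_simps)
  have "(\<lambda>k. -1 + ((1 + v) / 2^(m0+1)) * (1/2)^k) \<longlonglongrightarrow> -1 + ((1 + v) / 2^(m0+1)) * 0"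
    by (intro tendsto_intros LIMSEQ_realpow_zero) auto
  then show ?thesis unfolding e by simp
qed

lemma conv_range: fixes a b t :: real assumes "a \<le> b" "t \<in> {0..1}" shows "a + (b - a) * t \<in> {a..b}"
proof -
  have "0 \<le> (b - a) * t" using assms by (auto simp: zero_le_mult_iff)
  moreover have "(b - a) * t \<le> (b - a) * 1" using assms by (intro mult_left_mono) auto
  ultimately show ?thesis by auto
qed

lemma cluster_C:
  assumes ab: "a \<le> b" and y: "y \<in> {a..b}" and e: "\<epsilon> > 0"
    and th: "\<And>k. k \<ge> N \<Longrightarrow> T k = sqrt (real k + c)"
  shows "\<exists>k\<ge>M. \<bar>a + (b - a) * tri (T k) - y\<bar> < \<epsilon>"
proof (cases "a = b")
  case True then show ?thesis using y e by auto
next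
  case False
  then have ba: "b - a > 0" using ab by auto
  define z where "z = (y - a) / (b - a)"
  have z: "z \<in> {0..1}" unfolding z_def using y ba by (auto simp: divide_simps)
  obtain k where k: "k \<ge> M + N" "\<bar>tri (sqrt (real k + c)) - z\<bar> < \<epsilon> / (b - a)"
    using tri_cluster[OF z, of "\<epsilon> / (b - a)" "M + N" c] e ba by auto
  have Tk: "T k = sqrt (real k + c)" using th[of k] k(1) by simp
  have eq: "a + (b - a) * tri (T k) - y = (b - a) * (tri (sqrt (real k + c)) - z)"
    unfolding Tk z_def using ba by (simp add: field_simps)
  have "\<bar>a + (b - a) * tri (T k) - y\<bar> = (b - a) * \<bar>tri (sqrt (real k + c)) - z\<bar>"
    unfolding eq abs_mult using ba by simp
  also have "\<dots> < (b - a) * (\<epsilon> / (b - a))" using k(2) ba by (intro mult_strict_left_mono) auto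
  finally show ?thesis using k(1) ba by (intro exI[of _ k]) auto
qed

context cons begin

lemma Pp_conv:
  assumes x: "x \<in> {-1<..<1}" and K: "\<And>k. Kf (sk k) \<ge> real k + 1" and G: "\<And>k. gam BW BA (sk k) = C k"
  shows "(\<lambda>k. Pp (sk k) x - C k) \<longlonglongrightarrow> 0"
proof -
  define W where "W = (1-x)/(1+x) + (1+x)/(1-x)"
  have W0: "W \<ge> 0" using x unfolding W_def by auto
  have b: "\<bar>Pp (sk k) x - C k\<bar> \<le> 2 * W * inverse (real (Suc k))" for k
  proof -
    have "\<bar>Pp (sk k) x - C k\<bar> \<le> 2 * W / Kf (sk k)"
      unfolding Pp_def G[symmetric] W_def by (rule Pf_squeeze[OF Kf_ge1 x gam_rng])
    also have "\<dots> \<le> 2 * W / (real k + 1)" using K[of k] W0 by (intro divide_left_mono) auto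
    also have "\<dots> = 2 * W * inverse (real (Suc k))" by (simp add: divide_inverse)
    finally show ?thesis .
  qed
  have lim: "(\<lambda>k. 2 * W * inverse (real (Suc k))) \<longlonglongrightarrow> 0"
    using tendsto_mult[OF tendsto_const LIMSEQ_inverse_real_of_nat, of "2 * W"] by simp
  show ?thesis by (rule Lim_null_comparison[OF always_eventually lim]) (use b in auto)
qed

end


context cons begin
lemma omega_orbit:
  assumes v: "0 < v" "v < 1" and lev: "j \<ge> 1" "Dt j v = 1" "\<And>m. m > j \<Longrightarrow> Dt m v = 0"
    and Bj: "\<And>t. BW j t = a + (b - a) * tri t" and ab: "a \<le> b"
    and s: "s = Otop v i \<or> s = Obot v i" and r: "r \<in> {-1<..<1}"
  shows "omega_limit ff (r, s) = {a..b} \<times> {1}"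
proof -
  have sI: "s \<in> {-1<..<1}" using s Otop_range[OF v, of i] Obot_range[OF v, of i] by auto
  define x where "x = Q s r"
  have x: "x \<in> {-1<..<1}" unfolding x_def by (rule Q_open[OF r])
  define sk where "sk k = (f01 ^^ k) s" for k
  define X where "X k = (ff ^^ k) (r, s)" for k
  have X: "X k = (Pp (sk k) x, sk k)" for k
    unfolding X_def sk_def x_def using ff_iter[of r s k] r sI by auto
  obtain N m0 where tail: "\<And>k. sk (k + N) = Otop v (m0 + k)"
  proof (cases "s = Otop v i")
    case True then show ?thesis using that[of 0 i] iter_Otop[OF v] unfolding sk_def by auto
  next
    case False then have "s = Obot v i" using s by auto
    then show ?thesis using that[of "Suc i" 0] iter_Obot[OF v] unfolding sk_def by auto
  qed
  define \<rho> where "\<rho> = 1 - log 2 (2 - v)"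
  have \<rho>0: "\<rho> \<ge> 0"
  proof -
    have "log 2 (2 - v) \<le> log 2 2" using v by (subst log_le_cancel_iff) auto
    then show ?thesis unfolding \<rho>_def by simp
  qed
  have tau_sk: "tau (sk (k + N)) = real (m0 + k) + \<rho>" for k
    unfolding tail \<rho>_def using tau_Otop[OF v] by simp
  define C where "C k = a + (b - a) * tri (th (sk k))" for k
  have H3: "\<And>k. C k \<in> {a..b}" unfolding C_def using conv_range[OF ab tri_range] by auto
  have H1: "(\<lambda>k. snd (X k)) \<longlonglongrightarrow> 1"
    by (rule LIMSEQ_offset[where k = N]) (simp add: X tail Otop_lim[OF v])
  have H2: "(\<lambda>k. fst (X k) - C k) \<longlonglongrightarrow> 0"
  proof (rule LIMSEQ_offset[where k = "N + j^2"])
    define sk' where "sk' k = sk (k + (N + j^2))" for k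
    have sk': "sk' k = Otop v (m0 + (k + j^2))" for k
      unfolding sk'_def using tail[of "k + j^2"] by (simp add: add.assoc add.commute add.left_commute)
    have tau': "tau (sk' k) = real (m0 + (k + j^2)) + \<rho>" for k
      unfolding sk'_def using tau_sk[of "k + j^2"] by (simp add: add.assoc add.commute add.left_commute)
    have K: "Kf (sk' k) \<ge> real k + 1" for k unfolding Kf_def tau' using \<rho>0 by simp
    have G: "gam BW BA (sk' k) = C (k + (N + j^2))" for k
    proof -
      have thj: "th (sk' k) \<ge> real j"
      proof -
        have "real j = sqrt (real (j^2))" by simp
        also have "\<dots> \<le> th (sk' k)" unfolding th_def tau' using \<rho>0 by (intro real_sqrt_le_mono) auto
        finally show ?thesis .
      qed
      define M where "M = max j (nat \<lceil>th (sk' k)\<rceil>)"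
      have M: "real M \<ge> th (sk' k)" "M \<ge> j" unfolding M_def by linarith+
      have pos: "\<not> sk' k \<le> 0" using Otop_range[OF v] sk' by (simp add: not_le)
      have "gam BW BA (sk' k) = Fr BW M (sk' k)" using gam_eq[OF M(1)] pos by simp
      also have "\<dots> = BW j (th (sk' k))"
        by (rule Fr_level) (use lev thj M sk' dd_Otop[OF v] in auto)
      finally show ?thesis unfolding C_def sk'_def Bj by simp
    qed
    have "(\<lambda>k. Pp (sk' k) x - C (k + (N + j^2))) \<longlonglongrightarrow> 0"
      by (rule Pp_conv[OF x K G])
    then show "(\<lambda>k. fst (X (k + (N + j^2))) - C (k + (N + j^2))) \<longlonglongrightarrow> 0"
      unfolding X sk'_def by simp
  qed
  have H4: "\<exists>k\<ge>M. \<bar>C k - y\<bar> < \<epsilon>" if "y \<in> {a..b}" "\<epsilon> > 0" for y \<epsilon> M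
  proof -
    have "th (sk k) = sqrt (real k + (real m0 + \<rho> - real N))" if "k \<ge> N" for k
    proof -
      define k' where "k' = k - N"
      have k': "k = k' + N" unfolding k'_def using \<open>k \<ge> N\<close> by simp
      show ?thesis unfolding th_def k' tau_sk by (simp add: algebra_simps)
    qed
    then show ?thesis unfolding C_def using cluster_C[OF ab that, of N "\<lambda>k. th (sk k)"] by auto
  qed
  have "omega_limit ff (r, s) = {y. \<exists>n::nat\<Rightarrow>nat. strict_mono n \<and> (\<forall>i. 0 < n i) \<and> ((\<lambda>i. X (n i)) \<longlonglongrightarrow> y)}"
    unfolding omega_limit_def X_def ..
  also have "\<dots> = {a..b} \<times> {1}" by (rule omega_generic[OF H1 H2 H3 H4])
  finally show ?thesis .
qed

lemma alpha_orbit: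
  assumes v: "0 < v" "v < 1" and lev: "j \<ge> 1" "Dt j v = 1" "\<And>m. m > j \<Longrightarrow> Dt m v = 0"
    and Bj: "\<And>t. BA j t = a + (b - a) * tri t" and ab: "a \<le> b"
    and s: "s = Otop v i \<or> s = Obot v i" and r: "r \<in> {-1<..<1}"
  shows "alpha_limit ff (r, s) = {a..b} \<times> {-1}"
proof -
  have sI: "s \<in> {-1<..<1}" using s Otop_range[OF v, of i] Obot_range[OF v, of i] by auto
  have rsq: "(r, s) \<in> sq" using r sI sq_iff by auto
  define x where "x = Q s r"
  have x: "x \<in> {-1<..<1}" unfolding x_def by (rule Q_open[OF r])
  define sk where "sk k = (f01i ^^ k) s" for k
  define X where "X k = ((inv_into sq ff) ^^ k) (r, s)" for k
  have X: "X k = (Pp (sk k) x, sk k)" for k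
    unfolding X_def sk_def x_def using inv_iter[OF rsq, of k] gg_iter[of r s k] r sI by auto
  obtain N m0 where tail: "\<And>k. sk (k + N) = Obot v (m0 + k)"
  proof (cases "s = Obot v i")
    case True then show ?thesis using that[of 0 i] iteri_Obot[OF v] unfolding sk_def by auto
  next
    case False then have "s = Otop v i" using s by auto
    then show ?thesis using that[of "Suc i" 0] iteri_Otop[OF v] unfolding sk_def by auto
  qed
  define \<rho> where "\<rho> = log 2 (1 + v)"
  have \<rho>1: "\<rho> \<le> 1"
  proof -
    have "log 2 (1 + v) \<le> log 2 2" using v by (subst log_le_cancel_iff) auto
    then show ?thesis unfolding \<rho>_def by simp
  qed
  have tau_sk: "tau (sk (k + N)) = real (m0 + k) - \<rho>" if "m0 + k \<ge> 1" for k
    unfolding tail \<rho>_def using tau_Obot[OF v that] by simp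
  define C where "C k = a + (b - a) * tri (th (sk k))" for k
  have H3: "\<And>k. C k \<in> {a..b}" unfolding C_def using conv_range[OF ab tri_range] by auto
  have H1: "(\<lambda>k. snd (X k)) \<longlonglongrightarrow> -1"
    by (rule LIMSEQ_offset[where k = N]) (simp add: X tail Obot_lim[OF v])
  have H2: "(\<lambda>k. fst (X k) - C k) \<longlonglongrightarrow> 0"
  proof (rule LIMSEQ_offset[where k = "N + (j^2 + 1)"])
    define sk' where "sk' k = sk (k + (N + (j^2 + 1)))" for k
    have sk': "sk' k = Obot v (m0 + (k + (j^2 + 1)))" for k
      unfolding sk'_def using tail[of "k + (j^2 + 1)"] by (simp add: add.assoc add.commute add.left_commute)
    have tau': "tau (sk' k) = real (m0 + (k + (j^2 + 1))) - \<rho>" for k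
      unfolding sk'_def using tau_sk[of "k + (j^2 + 1)"] by (simp add: add.assoc add.commute add.left_commute)
    have K: "Kf (sk' k) \<ge> real k + 1" for k unfolding Kf_def tau'
      using \<rho>1 zero_le_power2[of "real j"] of_nat_0_le_iff[of m0] by (simp only: of_nat_add of_nat_power)
    have G: "gam BW BA (sk' k) = C (k + (N + (j^2 + 1)))" for k
    proof -
      have thj: "th (sk' k) \<ge> real j"
      proof -
        have "real j = sqrt (real (j^2))" by simp
        also have "\<dots> \<le> th (sk' k)" unfolding th_def tau'
        proof (intro real_sqrt_le_mono)
          have "real m0 \<ge> 0" "real k \<ge> 0" by simp_all
          then show "real (j\<^sup>2) \<le> real (m0 + (k + (j\<^sup>2 + 1))) - \<rho>" using \<rho>1 by simp
        qed
        finally show ?thesis .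
      qed
      define M where "M = max j (nat \<lceil>th (sk' k)\<rceil>)"
      have M: "real M \<ge> th (sk' k)" "M \<ge> j" unfolding M_def by linarith+
      have neg: "sk' k \<le> 0" using Obot_range[OF v] sk' by (simp add: less_imp_le)
      have "gam BW BA (sk' k) = Fr BA M (sk' k)" using gam_eq[OF M(1)] neg by simp
      also have "\<dots> = BA j (th (sk' k))"
        by (rule Fr_level) (use lev thj M sk' dd_Obot[OF v] in auto)
      finally show ?thesis unfolding C_def sk'_def Bj by simp
    qed
    have "(\<lambda>k. Pp (sk' k) x - C (k + (N + (j^2 + 1)))) \<longlonglongrightarrow> 0"
      by (rule Pp_conv[OF x K G])
    then show "(\<lambda>k. fst (X (k + (N + (j^2 + 1)))) - C (k + (N + (j^2 + 1)))) \<longlonglongrightarrow> 0"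
      unfolding X sk'_def by simp
  qed
  have H4: "\<exists>k\<ge>M. \<bar>C k - y\<bar> < \<epsilon>" if "y \<in> {a..b}" "\<epsilon> > 0" for y \<epsilon> M
  proof -
    have "th (sk k) = sqrt (real k + (real m0 - \<rho> - real N))" if "k \<ge> N + 1" for k
    proof -
      define k' where "k' = k - N"
      have k': "k = k' + N" "k' \<ge> 1" unfolding k'_def using \<open>k \<ge> N + 1\<close> by simp_all
      show ?thesis unfolding th_def k'(1) using tau_sk[of k'] k'(2) by (simp add: algebra_simps)
    qed
    then show ?thesis unfolding C_def using cluster_C[OF ab that, of "N + 1" "\<lambda>k. th (sk k)"] by auto
  qed
  have "alpha_limit ff (r, s) = {y. \<exists>n::nat\<Rightarrow>nat. strict_mono n \<and> (\<forall>i. 0 < n i) \<and> ((\<lambda>i. X (n i)) \<longlonglongrightarrow> y)}"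
    unfolding alpha_limit_def omega_limit_def X_def ..
  also have "\<dots> = {a..b} \<times> {-1}" by (rule omega_generic[OF H1 H2 H3 H4])
  finally show ?thesis .
qed

end


lemma real_lt_pow2: "m < (2::nat)^j \<Longrightarrow> real m < (2::real)^j"
proof -
  assume "m < (2::nat)^j"
  then have "real m < real ((2::nat)^j)" by (simp only: of_nat_less_iff)
  then show ?thesis by simp
qed
lemma real_gt_pow2: "(2::nat)^j < m \<Longrightarrow> (2::real)^j < real m"
proof -
  assume "(2::nat)^j < m"
  then have "real ((2::nat)^j) < real m" by (simp only: of_nat_less_iff)
  then show ?thesis by simp
qed

lemma tent_half: "tent (1/2) = 1" unfolding tent_def by simp

lemma tent_dyadic: "j \<ge> 1 \<Longrightarrow> odd m \<Longrightarrow> m < 2^j \<Longrightarrow> (tent ^^ j) (real m / 2^j) = 1"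
proof (induction j arbitrary: m rule: nat_induct_at_least)
  case base
  then have "m < 2" by simp
  with base(1) have "m = 1" by (cases m) auto
  then show ?case using tent_half by simp
next
  case (Suc j)
  have j2: "even ((2::nat)^j)" using Suc.hyps by simp
  have eq: "(tent ^^ Suc j) (real m / 2^Suc j) = (tent ^^ j) (tent (real m / 2^Suc j))"
    by (simp only: funpow_Suc_right o_def)
  show ?case
  proof (cases "m < 2^j")
    case True
    have "real m < 2^j" using True by (rule real_lt_pow2)
    then have "2 * (real m / 2^Suc j) - 1 \<le> 0" by (simp add: divide_simps)
    then have "tent (real m / 2^Suc j) = real m / 2^j" unfolding tent_def by simp
    then show ?thesis using eq Suc.IH[OF Suc.prems(1) True] by simp
  next
    case False
    moreover have "m \<noteq> 2^j" using j2 Suc.prems(1) by auto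
    ultimately have gt: "m > 2^j" by simp
    define m' where "m' = 2^Suc j - m"
    obtain q where q: "m = 2*q + 1" using Suc.prems(1) oddE by blast
    have odd': "odd m'" unfolding m'_def using Suc.prems(2) q by (simp; presburger)
    have lt': "m' < 2^j" unfolding m'_def using gt zero_less_power[of "2::nat" j] by (simp; arith)
    have "real m > 2^j" using gt by (rule real_gt_pow2)
    then have "2 * (real m / 2^Suc j) - 1 \<ge> 0" by (simp add: divide_simps)
    then have "tent (real m / 2^Suc j) = 2 - real m / 2^j" unfolding tent_def by (simp add: field_simps)
    also have "\<dots> = real m' / 2^j"
    proof -
      have "real m' = 2^Suc j - real m" unfolding m'_def using Suc.prems(2) by (simp add: of_nat_diff)
      then show ?thesis by (simp add: field_simps)
    qed
    finally show ?thesis using eq Suc.IH[OF odd' lt'] by simp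
  qed
qed

lemma tentp_1: "(tent ^^ Suc d) 1 = 0"
proof -
  have "(tent ^^ Suc d) 1 = (tent ^^ d) (tent 1)" by (simp only: funpow_Suc_right o_def)
  moreover have "tent 1 = 0" unfolding tent_def by simp
  ultimately show ?thesis by simp
qed

lemma dyadic_level:
  assumes "j \<ge> 1" "odd m" "m < 2^j"
  shows "Dt j (real m / 2^j) = 1" "\<And>i. i > j \<Longrightarrow> Dt i (real m / 2^j) = 0"
proof -
  show "Dt j (real m / 2^j) = 1" unfolding Dt_def using tent_dyadic[OF assms] assms(1) by simp
  fix i assume "i > j"
  define d where "d = i - j - 1"
  have d: "i = Suc d + j" unfolding d_def using \<open>i > j\<close> by simp
  have "(tent ^^ i) (real m / 2^j) = (tent ^^ Suc d) ((tent ^^ j) (real m / 2^j))"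
    unfolding d by (simp only: funpow_add o_def)
  then show "Dt i (real m / 2^j) = 0" unfolding Dt_def using tent_dyadic[OF assms] tentp_1 d by simp
qed

definition lab :: "nat \<Rightarrow> nat" where "lab j = fst (prod_decode (j - 1))"

definition Vn :: "nat \<Rightarrow> real set" where
  "Vn n = {real m / 2^j | m j. j \<ge> 1 \<and> lab j = n \<and> odd m \<and> m < 2^j}"

lemma Vn_range: "v \<in> Vn n \<Longrightarrow> 0 < v \<and> v < 1"
proof -
  assume "v \<in> Vn n"
  then obtain m j where v: "v = real m / 2^j" "odd m" "m < 2^j" unfolding Vn_def by auto
  have "m > 0" using v(2) by (cases m) auto
  moreover have "real m < 2^j" using v(3) by (rule real_lt_pow2)
  ultimately show ?thesis unfolding v(1) by (simp add: divide_simps)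
qed

lemma Vn_level: "v \<in> Vn n \<Longrightarrow> \<exists>j. j \<ge> 1 \<and> lab j = n \<and> Dt j v = 1 \<and> (\<forall>i>j. Dt i v = 0)"
  unfolding Vn_def using dyadic_level by blast

lemma Vn_disj: assumes "n \<noteq> n'" shows "Vn n \<inter> Vn n' = {}"
proof (rule ccontr)
  assume "Vn n \<inter> Vn n' \<noteq> {}"
  then obtain v where v: "v \<in> Vn n" "v \<in> Vn n'" by auto
  obtain j where j: "j \<ge> 1" "lab j = n" "Dt j v = 1" "\<forall>i>j. Dt i v = 0" using Vn_level[OF v(1)] by auto
  obtain j' where j': "j' \<ge> 1" "lab j' = n'" "Dt j' v = 1" "\<forall>i>j'. Dt i v = 0" using Vn_level[OF v(2)] by auto
  have "j = j'"
  proof (rule ccontr)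
    assume "j \<noteq> j'"
    then have "j < j' \<or> j' < j" by auto
    then show False using j j' by auto
  qed
  then show False using j j' assms by simp
qed

lemma dyadic_near:
  assumes y: "y \<in> {0..1}" and j: "j \<ge> 1"
  shows "\<exists>m. odd m \<and> m < 2^j \<and> \<bar>real m / 2^j - y\<bar> \<le> 1 / 2^j"
proof -
  define P :: nat where "P = 2^(j-1)"
  have P1: "P \<ge> 1" unfolding P_def by simp
  have jj: "j = Suc (j - 1)" using j by simp
  have P2: "(2::nat)^j = 2 * P" unfolding P_def by (subst jj) simp
  have P2r: "(2::real)^j = 2 * real P" unfolding P_def by (subst jj) simp
  define q where "q = nat \<lfloor>y * real P\<rfloor>"
  have q: "real q \<le> y * real P" "y * real P < real q + 1" unfolding q_def using y by auto
  show ?thesis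
  proof (cases "q \<le> P - 1")
    case True
    define m where "m = 2 * q + 1"
    have m: "odd m" "m < 2^j" unfolding m_def P2 using True P1 by auto
    have "\<bar>real m / (2 * real P) - y\<bar> \<le> 1 / (2 * real P)"
    proof -
      have "\<bar>real m - 2 * real P * y\<bar> \<le> 1" unfolding m_def using q by (simp add: algebra_simps abs_le_iff)
      then show ?thesis using P1 by (simp add: abs_le_iff divide_simps algebra_simps)
    qed
    then show ?thesis using m unfolding P2r by blast
  next
    case False
    then have "q \<ge> P" by simp
    then have "real q \<ge> real P" by simp
    then have "1 * real P \<le> y * real P" using q by simp
    then have "1 \<le> y" using mult_right_le_imp_le[of 1 "real P" y] P1 by simp
    then have y1: "y = 1" using y by simp
    define m where "m = 2 * P - 1"
    have m: "odd m" "m < 2^j" unfolding m_def P2 using P1 by auto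
    have "real m = 2 * real P - 1" unfolding m_def using P1 by (simp add: of_nat_diff)
    then have "\<bar>real m / (2 * real P) - y\<bar> \<le> 1 / (2 * real P)" using y1 P1 by (simp add: divide_simps)
    then show ?thesis using m unfolding P2r by blast
  qed
qed

lemma Vn_dense: assumes "y \<in> {0..1}" "\<epsilon> > 0" shows "\<exists>v\<in>Vn n. \<bar>v - y\<bar> < \<epsilon>"
proof -
  obtain i where i: "(1/2::real)^i < \<epsilon>" using real_arch_pow_inv[OF assms(2), of "1/2"] by auto
  define j where "j = prod_encode (n, i) + 1"
  have j1: "j \<ge> 1" and lab: "lab j = n" unfolding j_def lab_def by auto
  have ij: "i \<le> j" unfolding j_def using le_prod_encode_2[of i n] by simp
  obtain m where m: "odd m" "m < 2^j" "\<bar>real m / 2^j - y\<bar> \<le> 1 / 2^j" using dyadic_near[OF assms(1) j1] by auto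
  have "(1::real) / 2^j \<le> (1/2)^i" using ij by (simp add: power_one_over[symmetric] power_decreasing)
  then have "\<bar>real m / 2^j - y\<bar> < \<epsilon>" using m(3) i by linarith
  moreover have "real m / 2^j \<in> Vn n" unfolding Vn_def using j1 lab m by auto
  ultimately show ?thesis by blast
qed

lemma calA_int:
  assumes W: "W \<in> calA"
  shows "W = {Inf (fst ` W)..Sup (fst ` W)} \<times> {1}" "-1 \<le> Inf (fst ` W)" "Inf (fst ` W) \<le> Sup (fst ` W)" "Sup (fst ` W) \<le> 1"
proof -
  have W1: "W \<noteq> {}" "connected W" "closed W" "W \<subseteq> {-1..1} \<times> {1}"
    using W unfolding calA_def Jline_def JJ_def by auto
  have cW: "compact W"
  proof -
    have "compact (({-1..1::real} \<times> {1::real}) \<inter> W)" by (intro compact_Int_closed compact_Times W1) auto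
    then show ?thesis using W1(4) by (simp add: Int_absorb1)
  qed
  define A where "A = fst ` W"
  have cA: "compact A" unfolding A_def by (intro compact_continuous_image continuous_intros cW)
  have coA: "connected A" unfolding A_def by (intro connected_continuous_image continuous_intros W1)
  obtain a b where ab: "A = {a..b}" using connected_compact_interval_1 cA coA by blast
  have ne: "A \<noteq> {}" unfolding A_def using W1 by auto
  then have aleb: "a \<le> b" using ab by auto
  have AJ: "A \<subseteq> {-1..1}" unfolding A_def using W1(4) by auto
  have WA: "W = A \<times> {1}"
  proof
    show "W \<subseteq> A \<times> {1}" unfolding A_def using W1(4) by force
    show "A \<times> {1} \<subseteq> W"
    proof
      fix p :: "real \<times> real" assume "p \<in> A \<times> {1}"
      then obtain q where q: "q \<in> W" "p = (fst q, 1)" unfolding A_def by auto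
      then have "snd q = 1" using W1(4) by auto
      then show "p \<in> W" using q by (metis prod.collapse)
    qed
  qed
  show "W = {Inf (fst ` W)..Sup (fst ` W)} \<times> {1}" using WA ab aleb unfolding A_def by simp
  show "-1 \<le> Inf (fst ` W)" "Inf (fst ` W) \<le> Sup (fst ` W)" "Sup (fst ` W) \<le> 1"
    using AJ ab aleb unfolding A_def[symmetric] by auto
qed

lemma calA'_int:
  assumes W: "W \<in> calA'"
  shows "W = {Inf (fst ` W)..Sup (fst ` W)} \<times> {-1}" "-1 \<le> Inf (fst ` W)" "Inf (fst ` W) \<le> Sup (fst ` W)" "Sup (fst ` W) \<le> 1"
proof -
  have W1: "W \<noteq> {}" "connected W" "closed W" "W \<subseteq> {-1..1} \<times> {-1}"
    using W unfolding calA'_def Jline_def JJ_def by auto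
  have cW: "compact W"
  proof -
    have "compact (({-1..1::real} \<times> {-1::real}) \<inter> W)" by (intro compact_Int_closed compact_Times W1) auto
    then show ?thesis using W1(4) by (simp add: Int_absorb1)
  qed
  define A where "A = fst ` W"
  have cA: "compact A" unfolding A_def by (intro compact_continuous_image continuous_intros cW)
  have coA: "connected A" unfolding A_def by (intro connected_continuous_image continuous_intros W1)
  obtain a b where ab: "A = {a..b}" using connected_compact_interval_1 cA coA by blast
  have ne: "A \<noteq> {}" unfolding A_def using W1 by auto
  then have aleb: "a \<le> b" using ab by auto
  have AJ: "A \<subseteq> {-1..1}" unfolding A_def using W1(4) by auto
  have WA: "W = A \<times> {-1}"
  proof
    show "W \<subseteq> A \<times> {-1}" unfolding A_def using W1(4) by force
    show "A \<times> {-1} \<subseteq> W"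
    proof
      fix p :: "real \<times> real" assume "p \<in> A \<times> {-1}"
      then obtain q where q: "q \<in> W" "p = (fst q, -1)" unfolding A_def by auto
      then have "snd q = -1" using W1(4) by auto
      then show "p \<in> W" using q by (metis prod.collapse)
    qed
  qed
  show "W = {Inf (fst ` W)..Sup (fst ` W)} \<times> {-1}" using WA ab aleb unfolding A_def by simp
  show "-1 \<le> Inf (fst ` W)" "Inf (fst ` W) \<le> Sup (fst ` W)" "Sup (fst ` W) \<le> 1"
    using AJ ab aleb unfolding A_def[symmetric] by auto
qed



definition Sset :: "nat \<Rightarrow> real set" where
  "Sset n = (\<lambda>p. Otop (fst p) (snd p)) ` (Vn n \<times> UNIV) \<union> (\<lambda>p. Obot (fst p) (snd p)) ` (Vn n \<times> UNIV)"

lemma Sset_mem: "s \<in> Sset n \<longleftrightarrow> (\<exists>v k. v \<in> Vn n \<and> (s = Otop v k \<or> s = Obot v k))"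
  unfolding Sset_def by force

lemma Vn_countable: "countable (Vn n)"
proof -
  have "Vn n \<subseteq> (\<lambda>p. real (fst p) / 2^(snd p)) ` (UNIV :: (nat \<times> nat) set)"
  proof
    fix v assume "v \<in> Vn n"
    then obtain m j where "v = real m / 2^j" unfolding Vn_def by auto
    then show "v \<in> (\<lambda>p. real (fst p) / 2^(snd p)) ` (UNIV :: (nat \<times> nat) set)"
      by (intro image_eqI[of _ _ "(m, j)"]) auto
  qed
  then show ?thesis by (rule countable_subset) auto
qed

lemma Sset_countable: "countable (Sset n)"
  unfolding Sset_def using Vn_countable by (intro countable_Un countable_image countable_SIGMA) auto

lemma Sset_sub: "Sset n \<subseteq> {-1<..<1}"
proof
  fix s assume "s \<in> Sset n"
  then obtain v k where v: "v \<in> Vn n" "s = Otop v k \<or> s = Obot v k" unfolding Sset_mem by auto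
  have "0 < v" "v < 1" using Vn_range[OF v(1)] by auto
  then show "s \<in> {-1<..<1}" using v(2) Otop_range[of v k] Obot_range[of v k] by auto
qed

lemma Sset_disj: assumes "n \<noteq> n'" shows "Sset n \<inter> Sset n' = {}"
proof (rule ccontr)
  assume "Sset n \<inter> Sset n' \<noteq> {}"
  then obtain s where s: "s \<in> Sset n" "s \<in> Sset n'" by auto
  obtain v k where v: "v \<in> Vn n" "s = Otop v k \<or> s = Obot v k" using s(1) unfolding Sset_mem by auto
  obtain v' k' where v': "v' \<in> Vn n'" "s = Otop v' k' \<or> s = Obot v' k'" using s(2) unfolding Sset_mem by auto
  have r: "0 < v" "v < 1" "0 < v'" "v' < 1" using Vn_range v(1) v'(1) by auto
  have "v = v'"
  proof -
    consider "s = Otop v k" "s = Otop v' k'" | "s = Otop v k" "s = Obot v' k'"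
      | "s = Obot v k" "s = Otop v' k'" | "s = Obot v k" "s = Obot v' k'" using v(2) v'(2) by blast
    then show ?thesis
    proof cases
      case 1 then show ?thesis using vt_Otop[of v k] vt_Otop[of v' k'] r by auto
    next
      case 2 then show ?thesis using Otop_range[of v k] Obot_range[of v' k'] r by auto
    next
      case 3 then show ?thesis using Otop_range[of v' k'] Obot_range[of v k] r by auto
    next
      case 4 then show ?thesis using vb_Obot[of v k] vb_Obot[of v' k'] r by auto
    qed
  qed
  then show False using Vn_disj[OF assms] v(1) v'(1) by auto
qed

lemma half_pow: "(1/2::real)^k = 1 / 2^k" by (simp add: power_one_over)

lemma Sset_dense: "JJ \<subseteq> closure (Sset n)"
proof
  fix x assume x: "x \<in> JJ"
  obtain v0 where v0: "v0 \<in> Vn n" using Vn_dense[of "1/2" 1 n] by auto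
  have v0r: "0 < v0" "v0 < 1" using Vn_range[OF v0] by auto
  show "x \<in> closure (Sset n)" unfolding closure_approachable
  proof (intro allI impI)
    fix \<epsilon> :: real assume e: "\<epsilon> > 0"
    obtain k where k: "1 / 2^k < \<epsilon>" using real_arch_pow_inv[OF e, of "1/2"] by (auto simp: half_pow)
    consider "x = 1" | "x = -1" | "0 \<le> x" "x < 1" | "-1 < x" "x < 0" using x unfolding JJ_def by force
    then show "\<exists>y\<in>Sset n. dist y x < \<epsilon>"
    proof cases
      case 1
      have "Otop v0 k \<in> Sset n" using v0 unfolding Sset_mem by auto
      moreover have "\<bar>Otop v0 k - 1\<bar> < \<epsilon>"
      proof -
        have "(2 - v0) / 2^(k+1) < 1 / 2^k" using v0r by (simp add: divide_simps)
        moreover have "(2 - v0) / 2^(k+1) > 0" using v0r by simp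
        ultimately show ?thesis unfolding Otop_def using k by simp
      qed
      ultimately show ?thesis using 1 by (auto simp: dist_real_def)
    next
      case 2
      have "Obot v0 k \<in> Sset n" using v0 unfolding Sset_mem by auto
      moreover have "\<bar>Obot v0 k + 1\<bar> < \<epsilon>"
      proof -
        have "(1 + v0) / 2^(k+1) < 1 / 2^k" using v0r by (simp add: divide_simps)
        moreover have "(1 + v0) / 2^(k+1) > 0" using v0r by simp
        ultimately show ?thesis unfolding Obot_def using k by simp
      qed
      ultimately show ?thesis using 2 by (auto simp: dist_real_def)
    next
      case 3
      have "\<not> (1 / 2^0 < 1 - x)" using 3 by simp
      moreover have "\<exists>m. 1 / 2^m < 1 - x"
        using real_arch_pow_inv[of "1 - x" "1/2"] 3 by (auto simp: half_pow)
      ultimately obtain K where K: "\<not> (1 / 2^K < 1 - x)" "1 / 2^(Suc K) < 1 - x"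
        using exists_least_lemma[where P = "\<lambda>m. 1 / (2::real)^m < 1 - x"] by blast
      define w where "w = 2 - 2^(K+1) * (1 - x)"
      have w: "w \<in> {0..1}"
      proof -
        have "(2::real)^(K+1) * (1 / 2^(Suc K)) < 2^(K+1) * (1 - x)"
          using K(2) by (intro mult_strict_left_mono) auto
        then have "1 < 2^(K+1) * (1 - x)" by simp
        moreover have "(2::real)^(K+1) * (1 - x) \<le> 2^(K+1) * (1 / 2^K)"
          using K(1) by (intro mult_left_mono) auto
        then have "2^(K+1) * (1 - x) \<le> 2" by simp
        ultimately show ?thesis unfolding w_def by auto
      qed
      obtain v where v: "v \<in> Vn n" "\<bar>v - w\<bar> < \<epsilon>" using Vn_dense[OF w e] by auto
      have eq: "Otop v K - x = (v - w) / 2^(K+1)" unfolding Otop_def w_def by (simp add: field_simps)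
      have "\<bar>Otop v K - x\<bar> \<le> \<bar>v - w\<bar>"
      proof -
        have "\<bar>(v - w) / 2^(K+1)\<bar> = \<bar>v - w\<bar> / 2^(K+1)" by (simp add: abs_divide)
        also have "\<dots> \<le> \<bar>v - w\<bar> / 1" using one_le_power[of "2::real" "K+1"] by (intro divide_left_mono) auto
        finally show ?thesis unfolding eq by simp
      qed
      moreover have "Otop v K \<in> Sset n" using v unfolding Sset_mem by auto
      ultimately show ?thesis using v(2) by (intro bexI[of _ "Otop v K"]) (auto simp: dist_real_def)
    next
      case 4
      have "\<not> (1 / 2^0 \<le> 1 + x)" using 4 by simp
      moreover have "\<exists>m. 1 / 2^m \<le> 1 + x"
      proof -
        obtain m where "1 / (2::real)^m < 1 + x" using real_arch_pow_inv[of "1 + x" "1/2"] 4 by (auto simp: half_pow)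
        then show ?thesis by (intro exI[of _ m]) simp
      qed
      ultimately obtain K where K: "\<not> (1 / 2^K \<le> 1 + x)" "1 / 2^(Suc K) \<le> 1 + x"
        using exists_least_lemma[where P = "\<lambda>m. 1 / (2::real)^m \<le> 1 + x"] by blast
      define w where "w = 2^(K+1) * (1 + x) - 1"
      have w: "w \<in> {0..1}"
      proof -
        have "(2::real)^(K+1) * (1 / 2^(Suc K)) \<le> 2^(K+1) * (1 + x)"
          using K(2) by (intro mult_left_mono) auto
        then have "1 \<le> 2^(K+1) * (1 + x)" by simp
        moreover have "(2::real)^(K+1) * (1 + x) < 2^(K+1) * (1 / 2^K)"
          using K(1) by (intro mult_strict_left_mono) auto
        then have "2^(K+1) * (1 + x) < 2" by simp
        ultimately show ?thesis unfolding w_def by auto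
      qed
      obtain v where v: "v \<in> Vn n" "\<bar>v - w\<bar> < \<epsilon>" using Vn_dense[OF w e] by auto
      have eq: "Obot v K - x = (v - w) / 2^(K+1)" unfolding Obot_def w_def by (simp add: field_simps)
      have "\<bar>Obot v K - x\<bar> \<le> \<bar>v - w\<bar>"
      proof -
        have "\<bar>(v - w) / 2^(K+1)\<bar> = \<bar>v - w\<bar> / 2^(K+1)" by (simp add: abs_divide)
        also have "\<dots> \<le> \<bar>v - w\<bar> / 1" using one_le_power[of "2::real" "K+1"] by (intro divide_left_mono) auto
        finally show ?thesis unfolding eq by simp
      qed
      moreover have "Obot v K \<in> Sset n" using v unfolding Sset_mem by auto
      ultimately show ?thesis using v(2) by (intro bexI[of _ "Obot v K"]) (auto simp: dist_real_def)
    qed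
  qed
qed

theorem corollary3p3:
  fixes Nstar :: "nat set"
    and \<omega> \<alpha> :: "nat \<Rightarrow> (real \<times> real) set"
  assumes "Nstar \<noteq> {}"
    and "\<forall>n \<in> Nstar. \<omega> n \<in> calA"
    and "\<forall>n \<in> Nstar. \<alpha> n \<in> calA'"
  shows "\<exists>(S :: nat \<Rightarrow> real set) (f :: real \<times> real \<Rightarrow> real \<times> real).
           (\<forall>m \<in> Nstar. \<forall>n \<in> Nstar. m \<noteq> n \<longrightarrow> S m \<inter> S n = {}) \<and>
           (\<forall>n \<in> Nstar. countable (S n) \<and> S n \<subseteq> {-1<..<1}) \<and>
           normally_rising f \<and>
           (\<forall>n \<in> Nstar. JJ \<subseteq> closure (S n) \<and>
              (\<forall>r \<in> {-1<..<1}. \<forall>s \<in> S n.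
                  omega_limit f (r, s) = \<omega> n \<and> alpha_limit f (r, s) = \<alpha> n))"
proof -
  define aW where "aW n = (if n \<in> Nstar then Inf (fst ` \<omega> n) else 0)" for n
  define bW where "bW n = (if n \<in> Nstar then Sup (fst ` \<omega> n) else 0)" for n
  define aA where "aA n = (if n \<in> Nstar then Inf (fst ` \<alpha> n) else 0)" for n
  define bA where "bA n = (if n \<in> Nstar then Sup (fst ` \<alpha> n) else 0)" for n
  have bdW: "-1 \<le> aW n \<and> aW n \<le> bW n \<and> bW n \<le> 1" for n
    using calA_int[of "\<omega> n"] assms(2) unfolding aW_def bW_def by auto
  have bdA: "-1 \<le> aA n \<and> aA n \<le> bA n \<and> bA n \<le> 1" for n
    using calA'_int[of "\<alpha> n"] assms(3) unfolding aA_def bA_def by auto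
  define BW where "BW j t = aW (lab j) + (bW (lab j) - aW (lab j)) * tri t" for j t
  define BA where "BA j t = aA (lab j) + (bA (lab j) - aA (lab j)) * tri t" for j t
  have lipgen: "\<bar>(a + (b - a) * tri t) - (a + (b - a) * tri t')\<bar> \<le> 4 * \<bar>t - t'\<bar>"
    if "-1 \<le> a" "a \<le> b" "b \<le> 1" for a b t t' :: real
  proof -
    have e: "(a + (b - a) * tri t) - (a + (b - a) * tri t') = (b - a) * (tri t - tri t')"
      by (simp add: algebra_simps)
    have "\<bar>(a + (b - a) * tri t) - (a + (b - a) * tri t')\<bar> = (b - a) * \<bar>tri t - tri t'\<bar>"
      unfolding e abs_mult using that by simp
    also have "\<dots> \<le> 2 * (2 * \<bar>t - t'\<bar>)" using that tri_lip[of t t'] by (intro mult_mono) auto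
    finally show ?thesis by simp
  qed
  have cons: "cons BW BA"
  proof
    fix j t
    show "BW j t \<in> {-1..1}" unfolding BW_def using conv_range[OF _ tri_range, of "aW (lab j)" "bW (lab j)" t] bdW[of "lab j"] by auto
    show "BA j t \<in> {-1..1}" unfolding BA_def using conv_range[OF _ tri_range, of "aA (lab j)" "bA (lab j)" t] bdA[of "lab j"] by auto
  next
    fix j
    show "continuous_on UNIV (BW j)" unfolding BW_def[abs_def] by (intro continuous_intros cont_tri)
    show "continuous_on UNIV (BA j)" unfolding BA_def[abs_def] by (intro continuous_intros cont_tri)
  next
    fix j t t'
    show "\<bar>BW j t - BW j t'\<bar> \<le> 4 * \<bar>t - t'\<bar>" unfolding BW_def using lipgen bdW[of "lab j"] by blast
    show "\<bar>BA j t - BA j t'\<bar> \<le> 4 * \<bar>t - t'\<bar>" unfolding BA_def using lipgen bdA[of "lab j"] by blast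
  qed
  interpret C: cons BW BA by (rule cons)
  have P1: "\<forall>m \<in> Nstar. \<forall>n \<in> Nstar. m \<noteq> n \<longrightarrow> Sset m \<inter> Sset n = {}" using Sset_disj by auto
  have P2: "\<forall>n \<in> Nstar. countable (Sset n) \<and> Sset n \<subseteq> {-1<..<1}" using Sset_countable Sset_sub by auto
  have P3: "normally_rising C.ff" by (rule C.ff_nr)
  have P4: "\<forall>n \<in> Nstar. JJ \<subseteq> closure (Sset n) \<and>
              (\<forall>r \<in> {-1<..<1}. \<forall>s \<in> Sset n.
                  omega_limit C.ff (r, s) = \<omega> n \<and> alpha_limit C.ff (r, s) = \<alpha> n)"
  proof (intro ballI conjI Sset_dense)
    fix n and r s :: real assume n: "n \<in> Nstar" and r: "r \<in> {-1<..<1}" and s: "s \<in> Sset n"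
    obtain v k where v: "v \<in> Vn n" "s = Otop v k \<or> s = Obot v k" using s unfolding Sset_mem by auto
    have vr: "0 < v" "v < 1" using Vn_range[OF v(1)] by auto
    obtain j where j: "j \<ge> 1" "lab j = n" "Dt j v = 1" "\<forall>i>j. Dt i v = 0" using Vn_level[OF v(1)] by auto
    have bw: "\<And>t. BW j t = aW n + (bW n - aW n) * tri t" unfolding BW_def j(2) ..
    have ba: "\<And>t. BA j t = aA n + (bA n - aA n) * tri t" unfolding BA_def j(2) ..
    have "omega_limit C.ff (r, s) = {aW n..bW n} \<times> {1}"
      by (rule C.omega_orbit[OF vr j(1) j(3) _ bw _ v(2) r]) (use j(4) bdW in auto)
    also have "\<dots> = \<omega> n" using calA_int(1)[of "\<omega> n"] assms(2) n unfolding aW_def bW_def by auto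
    finally show "omega_limit C.ff (r, s) = \<omega> n" .
    have "alpha_limit C.ff (r, s) = {aA n..bA n} \<times> {-1}"
      by (rule C.alpha_orbit[OF vr j(1) j(3) _ ba _ v(2) r]) (use j(4) bdA in auto)
    also have "\<dots> = \<alpha> n" using calA'_int(1)[of "\<alpha> n"] assms(3) n unfolding aA_def bA_def by auto
    finally show "alpha_limit C.ff (r, s) = \<alpha> n" .
  qed
  show ?thesis using P1 P2 P3 P4 by blast
qed



end
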